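(* For any toric poset $P=P(G,[\omega])$, \[E\big(\hat G^{\mathrm{Hasse}}(P(G,\omega))\big)\subseteq E\big(\hat G^{\mathrm{torHasse}}(P(G,[\omega]))\big)\subseteq E\big(\bar G^{\mathrm{tor}}(P)\big)=\bigcap_{\omega'\in[\omega]}E\big(\bar G(P(G,\omega'))\big),\] where $E(\cdot)$ denotes edge sets.
   Context: Toric poset setup: $G=(V,E)$ finite simple graph, $V=[n]$; $\mathrm{Acyc}(G)$ acyclic orientations; $P(G,\omega)$ the poset given by the transitive closure of $\omega$; $[\omega]$ the class under the equivalence generated by converting a source into a sink; the toric graphic arrangement $\mathcal{A}_{\mathrm{tor}}(H)$ of a graph $H$ on $V$ consists of the hyperplanes $H^{\mathrm{tor}}_{ij}=\{x\in\mathbb{R}^V/\mathbb{Z}^V:x_i\equiv x_j\bmod 1\}$, $\{i,j\}\in E(H)$; its chambers correspond bijectively to classes $[\omega]$, $\omega\in\mathrm{Acyc}(H)$, and $P(G,[\omega])$ is identified with its chamber $c(P)$. For an ordinary poset $Q$: $\hat G^{\mathrm{Hasse}}(Q)$ is its Hasse diagram (edges the cover relations) and $\bar G(Q)$ its transitive closure graph (edges $\{i,j\}$ with $i,j$ comparable). Toric transitive closure $\bar G^{\mathrm{tor}}(P)$: the graph with edge set $E$ together with all $\{i,j\}$ such that $H^{\mathrm{tor}}_{ij}\cap c(P)=\emptyset$. Toric Hasse diagram $\hat G^{\mathrm{torHasse}}(P)$: the unique graph on $V$ such that for every graph $H$ on $V$, $c(P)$ is a chamber of $\mathcal{A}_{\mathrm{tor}}(H)$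 iff $E(\hat G^{\mathrm{torHasse}}(P))\subseteq E(H)\subseteq E(\bar G^{\mathrm{tor}}(P))$ (its existence and uniqueness are known). *)

theory Defs
  imports "HOL-Analysis.Analysis"
begin

definition vpairs :: "'a set \<Rightarrow> 'a set set" where
  "vpairs V = {e. \<exists>i j. i \<in> V \<and> j \<in> V \<and> i \<noteq> j \<and> e = {i, j}}"

definition simple_graph :: "'a set \<Rightarrow> 'a set set \<Rightarrow> bool" where
  "simple_graph V E \<longleftrightarrow> finite V \<and> E \<subseteq> vpairs V"

definition is_orientation :: "'a set \<Rightarrow> 'a set set \<Rightarrow> ('a \<times> 'a) set \<Rightarrow> bool" where
  "is_orientation V E \<omega> \<longleftrightarrow>
     (\<forall>i j. (i, j) \<in> \<omega> \<longrightarrow> {i, j} \<in> E \<and> (j, i) \<notin> \<omega>) \<and>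
     (\<forall>i j. {i, j} \<in> E \<and> i \<noteq> j \<longrightarrow> (i, j) \<in> \<omega> \<or> (j, i) \<in> \<omega>)"

definition Acyc :: "'a set \<Rightarrow> 'a set set \<Rightarrow> ('a \<times> 'a) set set" where
  "Acyc V E = {\<omega>. is_orientation V E \<omega> \<and> acyclic \<omega>}"

definition is_source :: "'a set \<Rightarrow> ('a \<times> 'a) set \<Rightarrow> 'a \<Rightarrow> bool" where
  "is_source V \<omega> v \<longleftrightarrow> v \<in> V \<and> (\<forall>u. (u, v) \<notin> \<omega>)"

definition flip_at :: "'a \<Rightarrow> ('a \<times> 'a) set \<Rightarrow> ('a \<times> 'a) set" where
  "flip_at v \<omega> = {(a, b) \<in> \<omega>. a \<noteq> v \<and> b \<noteq> v} \<union> {(b, v) | b. (v, b) \<in> \<omega>}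
                   \<union> {(v, b) | b. (b, v) \<in> \<omega>}"

definition flip_step :: "'a set \<Rightarrow> ('a \<times> 'a) set \<Rightarrow> ('a \<times> 'a) set \<Rightarrow> bool" where
  "flip_step V \<omega> \<omega>' \<longleftrightarrow> (\<exists>v. is_source V \<omega> v \<and> \<omega>' = flip_at v \<omega>)"

definition tor_class :: "'a set \<Rightarrow> ('a \<times> 'a) set \<Rightarrow> ('a \<times> 'a) set set" where
  "tor_class V \<omega> = {\<omega>'. (sup (flip_step V) (flip_step V)\<inverse>\<inverse>)\<^sup>*\<^sup>* \<omega> \<omega>'}"

text \<open>P(G,omega) is the strict order given by the transitive closure of omega.\<close>
definition covers :: "('a \<times> 'a) set \<Rightarrow> 'a \<Rightarrow> 'a \<Rightarrow> bool" where
  "covers \<omega> i j \<longleftrightarrow> (i, j) \<in> \<omega>\<^sup>+ \<and> \<not> (\<exists>k. (i, k) \<in> \<omega>\<^sup>+ \<and> (k, j) \<in> \<omega>\<^sup>+)"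

definition hasse_edges :: "('a \<times> 'a) set \<Rightarrow> 'a set set" where
  "hasse_edges \<omega> = {{i, j} | i j. covers \<omega> i j}"

definition tc_edges :: "('a \<times> 'a) set \<Rightarrow> 'a set set" where
  "tc_edges \<omega> = {{i, j} | i j. (i, j) \<in> \<omega>\<^sup>+}"

text \<open>Points of R^V are functions vanishing outside V; the torus R^V/Z^V is
  represented by Z^V-periodic subsets of this space.\<close>
definition RV :: "'a set \<Rightarrow> ('a \<Rightarrow> real) set" where
  "RV V = {x. \<forall>v. v \<notin> V \<longrightarrow> x v = 0}"

definition ZV :: "'a set \<Rightarrow> ('a \<Rightarrow> real) set" where
  "ZV V = {z. (\<forall>v. z v \<in> \<int>) \<and> (\<forall>v. v \<notin> V \<longrightarrow> z v = 0)}"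

text \<open>Lift of the complement of the toric graphic arrangement A_tor(H).\<close>
definition tor_complement :: "'a set \<Rightarrow> 'a set set \<Rightarrow> ('a \<Rightarrow> real) set" where
  "tor_complement V H = {x \<in> RV V. \<forall>i j. {i, j} \<in> H \<longrightarrow> x i - x j \<notin> \<int>}"

text \<open>Chambers of A_tor(H) (connected components of the complement in the torus),
  represented by their preimages in R^V: the union of all integer translates of a
  connected component of the lifted complement.\<close>
definition tor_chambers :: "'a set \<Rightarrow> 'a set set \<Rightarrow> ('a \<Rightarrow> real) set set" where
  "tor_chambers V H =
     {(\<Union>z\<in>ZV V. (\<lambda>x. (\<lambda>v. x v + z v)) ` connected_component_set (tor_complement V H) p)
       | p. p \<in> tor_complement V H}"

definition orient_of :: "'a set set \<Rightarrow> ('a \<Rightarrow> real) \<Rightarrow> ('a \<times> 'a) set" where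
  "orient_of E x = {(i, j). {i, j} \<in> E \<and> frac (x i) < frac (x j)}"

text \<open>The chamber c(P) of A_tor(G) identified with the toric poset P(G,[\<omega>]).\<close>
definition tor_chamber :: "'a set \<Rightarrow> 'a set set \<Rightarrow> ('a \<times> 'a) set \<Rightarrow> ('a \<Rightarrow> real) set" where
  "tor_chamber V E \<omega> = {x \<in> tor_complement V E. orient_of E x \<in> tor_class V \<omega>}"

definition torTC_edges :: "'a set \<Rightarrow> 'a set set \<Rightarrow> ('a \<times> 'a) set \<Rightarrow> 'a set set" where
  "torTC_edges V E \<omega> = E \<union> {{i, j} | i j. i \<in> V \<and> j \<in> V \<and> i \<noteq> j \<and>
       (\<forall>x \<in> tor_chamber V E \<omega>. x i - x j \<notin> \<int>)}"

definition torHasse_edges :: "'a set \<Rightarrow> 'a set set \<Rightarrow> ('a \<times> 'a) set \<Rightarrow> 'a set set" where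
  "torHasse_edges V E \<omega> = (THE F. F \<subseteq> vpairs V \<and>
      (\<forall>H. H \<subseteq> vpairs V \<longrightarrow>
         (tor_chamber V E \<omega> \<in> tor_chambers V H \<longleftrightarrow> F \<subseteq> H \<and> H \<subseteq> torTC_edges V E \<omega>)))"

end

theory Submission
  imports Defs
begin

definition Qs :: "'a set \<Rightarrow> 'a set set \<Rightarrow> ('a \<Rightarrow> real) \<Rightarrow> ('a \<Rightarrow> real) set" where
  "Qs V H p = {y \<in> RV V. \<forall>k l. {k, l} \<in> H \<longrightarrow>
       floor (y k - y l) = floor (p k - p l) \<and> y k - y l \<notin> \<int>}"

definition shiftz :: "('a \<Rightarrow> real) \<Rightarrow> ('a \<Rightarrow> real) \<Rightarrow> ('a \<Rightarrow> real)" where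
  "shiftz z x = (\<lambda>v. x v + z v)"

definition Ts :: "'a set \<Rightarrow> 'a set set \<Rightarrow> ('a \<Rightarrow> real) \<Rightarrow> ('a \<Rightarrow> real) set" where
  "Ts V H q = (\<Union>z\<in>ZV V. shiftz z ` Qs V H q)"

lemma floor_between:
  fixes a b :: real and m :: int
  assumes "of_int m < a" "a < of_int m + 1"
  shows "floor a = m \<and> a \<notin> \<int>"
proof
  show "floor a = m" using assms by linarith
  show "a \<notin> \<int>"
  proof
    assume "a \<in> \<int>" then obtain k where "a = of_int k" by (auto elim: Ints_cases)
    with assms show False by simp
  qed
qed

lemma nonint_floor_bounds:
  fixes a :: real
  assumes "a \<notin> \<int>"
  shows "of_int (floor a) < a \<and> a < of_int (floor a) + 1"
proof -
  have "of_int (floor a) \<le> a" by simp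
  moreover have "of_int (floor a) \<noteq> a" using assms by (metis Ints_of_int)
  ultimately show ?thesis by linarith
qed

lemma conv_between:
  fixes u w t c :: real
  assumes "c < u" "u < c + 1" "c < w" "w < c + 1" "0 \<le> t" "t \<le> 1"
  shows "c < (1 - t) * u + t * w \<and> (1 - t) * u + t * w < c + 1"
proof -
  have e1: "(1 - t) * u + t * w - c = (1 - t) * (u - c) + t * (w - c)" by (simp add: algebra_simps)
  have e2: "c + 1 - ((1 - t) * u + t * w) = (1 - t) * (c + 1 - u) + t * (c + 1 - w)" by (simp add: algebra_simps)
  have a1: "(1 - t) * (u - c) \<ge> 0" "t * (w - c) \<ge> 0" "(1 - t) * (c + 1 - u) \<ge> 0" "t * (c + 1 - w) \<ge> 0"
    using assms by auto
  have a2: "(1 - t) * (u - c) + t * (w - c) > 0"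
  proof (cases "t = 1")
    case True then show ?thesis using assms by simp
  next
    case False then have "(1 - t) * (u - c) > 0" using assms by simp
    then show ?thesis using a1 by linarith
  qed
  have a3: "(1 - t) * (c + 1 - u) + t * (c + 1 - w) > 0"
  proof (cases "t = 1")
    case True then show ?thesis using assms by simp
  next
    case False then have "(1 - t) * (c + 1 - u) > 0" using assms by simp
    then show ?thesis using a1 by linarith
  qed
  have "(1 - t) * u + t * w - c > 0" using e1 a2 by simp
  moreover have "c + 1 - ((1 - t) * u + t * w) > 0" using e2 a3 by simp
  ultimately show ?thesis by simp
qed

lemma seg_in_Qs:
  assumes "p \<in> Qs V H p" "y \<in> Qs V H p" "0 \<le> t" "t \<le> 1"
  shows "(\<lambda>v. (1 - t) * p v + t * y v) \<in> Qs V H p"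
proof -
  have "\<forall>v. v \<notin> V \<longrightarrow> (1 - t) * p v + t * y v = 0" using assms(1,2) by (simp add: Qs_def RV_def)
  moreover have "floor ((1 - t) * p k + t * y k - ((1 - t) * p l + t * y l)) = floor (p k - p l) \<and>
        (1 - t) * p k + t * y k - ((1 - t) * p l + t * y l) \<notin> \<int>" if "{k, l} \<in> H" for k l
  proof -
    have pn: "p k - p l \<notin> \<int>" and yf: "floor (y k - y l) = floor (p k - p l)" and yn: "y k - y l \<notin> \<int>"
      using assms(1,2) that by (auto simp: Qs_def)
    let ?c = "real_of_int (floor (p k - p l))"
    have b1: "?c < p k - p l \<and> p k - p l < ?c + 1" using nonint_floor_bounds[OF pn] .
    have b2: "?c < y k - y l \<and> y k - y l < ?c + 1" using nonint_floor_bounds[OF yn] yf by simp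
    have e: "(1 - t) * p k + t * y k - ((1 - t) * p l + t * y l) = (1 - t) * (p k - p l) + t * (y k - y l)"
      by algebra
    have cb: "?c < (1 - t) * (p k - p l) + t * (y k - y l) \<and> (1 - t) * (p k - p l) + t * (y k - y l) < ?c + 1"
      using conv_between[of ?c "p k - p l" "y k - y l" t] b1 b2 assms(3,4) by blast
    show ?thesis unfolding e
      using floor_between[of "floor (p k - p l)" "(1 - t) * (p k - p l) + t * (y k - y l)"] cb
      by blast
  qed
  ultimately show ?thesis by (simp add: Qs_def RV_def)
qed

lemma p_in_Qs: "p \<in> tor_complement V H \<Longrightarrow> p \<in> Qs V H p"
  by (auto simp: Qs_def tor_complement_def)

lemma Qs_sub_compl: "Qs V H p \<subseteq> tor_complement V H"
  by (auto simp: Qs_def tor_complement_def)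

lemma floor_ne_int_between:
  fixes u w :: real
  assumes "floor u \<noteq> floor w"
  shows "\<exists>m::int. min u w \<le> of_int m \<and> of_int m \<le> max u w"
proof (cases "floor u < floor w")
  case True
  then have "u < of_int (floor w)" by linarith
  moreover have "of_int (floor w) \<le> w" by simp
  moreover have "u \<le> w" using calculation by linarith
  ultimately show ?thesis by (intro exI[of _ "floor w"]) (auto simp: max_def min_def)
next
  case False
  then have "floor w < floor u" using assms by simp
  then have "w < of_int (floor u)" by linarith
  moreover have "of_int (floor u) \<le> u" by simp
  moreover have "w \<le> u" using calculation by linarith
  ultimately show ?thesis by (intro exI[of _ "floor u"]) (auto simp: max_def min_def)
qed

lemma component_eq_Qs:
  assumes "p \<in> tor_complement V H"
  shows "connected_component_set (tor_complement V H) p = Qs V H p"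
proof
  show "Qs V H p \<subseteq> connected_component_set (tor_complement V H) p"
  proof
    fix y assume y: "y \<in> Qs V H p"
    define s where "s = (\<lambda>t::real. (\<lambda>v. (1 - t) * p v + t * y v))"
    have cs: "continuous_on {0..1} s" unfolding s_def
      by (intro continuous_intros)
    have conn: "connected (s ` {0..1})"
      by (rule connected_continuous_image[OF cs]) simp
    have sub: "s ` {0..1} \<subseteq> tor_complement V H"
      using seg_in_Qs[OF p_in_Qs[OF assms] y] Qs_sub_compl unfolding s_def by fastforce
    have "p \<in> s ` {0..1}" by (rule image_eqI[of _ _ 0]) (auto simp: s_def)
    moreover have "y \<in> s ` {0..1}" by (rule image_eqI[of _ _ 1]) (auto simp: s_def)
    ultimately show "y \<in> connected_component_set (tor_complement V H) p"
      using connected_component_maximal[OF _ conn sub] by blast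
  qed
next
  show "connected_component_set (tor_complement V H) p \<subseteq> Qs V H p"
  proof
    fix y assume y: "y \<in> connected_component_set (tor_complement V H) p"
    let ?S = "connected_component_set (tor_complement V H) p"
    have Ssub: "?S \<subseteq> tor_complement V H" by (rule connected_component_subset)
    have pS: "p \<in> ?S" using assms by (simp add: connected_component_refl)
    have yC: "y \<in> tor_complement V H" using y Ssub by blast
    have "floor (y k - y l) = floor (p k - p l)" if kl: "{k, l} \<in> H" for k l
    proof (rule ccontr)
      assume ne: "floor (y k - y l) \<noteq> floor (p k - p l)"
      let ?f = "\<lambda>x::'a \<Rightarrow> real. x k - x l"
      have "continuous_on ?S ?f"
        by (intro continuous_on_diff continuous_on_subset[OF continuous_on_product_coordinates]) auto
      then have "connected (?f ` ?S)" by (rule connected_continuous_image) simp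
      then have ii: "is_interval (?f ` ?S)" by (simp add: is_interval_connected_1)
      obtain m :: int where m: "min (?f y) (?f p) \<le> of_int m" "of_int m \<le> max (?f y) (?f p)"
        using floor_ne_int_between[OF ne] by blast
      have "?f y \<in> ?f ` ?S" "?f p \<in> ?f ` ?S" using y pS by auto
      moreover have "min (?f y) (?f p) \<in> ?f ` ?S" "max (?f y) (?f p) \<in> ?f ` ?S"
        using calculation by (auto simp: min_def max_def)
      ultimately have "of_int m \<in> ?f ` ?S"
        using ii m unfolding is_interval_1 by blast
      then obtain x where "x \<in> ?S" "x k - x l = of_int m" by auto
      moreover then have "x \<in> tor_complement V H" using Ssub by blast
      ultimately show False using kl unfolding tor_complement_def by (metis (mono_tags, lifting) Ints_of_int mem_Collect_eq)
    qed
    then show "y \<in> Qs V H p" using yC by (auto simp: Qs_def tor_complement_def)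
  qed
qed

lemma tor_chambers_eq: "tor_chambers V H = {Ts V H q | q. q \<in> tor_complement V H}"
proof (intro set_eqI iffI)
  fix X assume "X \<in> tor_chambers V H"
  then obtain p where p: "p \<in> tor_complement V H"
    and X: "X = (\<Union>z\<in>ZV V. (\<lambda>x. (\<lambda>v. x v + z v)) ` connected_component_set (tor_complement V H) p)"
    unfolding tor_chambers_def by blast
  have "X = Ts V H p" unfolding X Ts_def shiftz_def component_eq_Qs[OF p] ..
  then show "X \<in> {Ts V H q | q. q \<in> tor_complement V H}" using p by blast
next
  fix X assume "X \<in> {Ts V H q | q. q \<in> tor_complement V H}"
  then obtain p where p: "p \<in> tor_complement V H" and X: "X = Ts V H p" by blast
  have "X = (\<Union>z\<in>ZV V. (\<lambda>x. (\<lambda>v. x v + z v)) ` connected_component_set (tor_complement V H) p)"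
    unfolding X Ts_def shiftz_def component_eq_Qs[OF p] ..
  then show "X \<in> tor_chambers V H" using p unfolding tor_chambers_def by blast
qed

lemma floor_diff_frac:
  fixes a b :: real
  shows "floor (a - b) = floor a - floor b - (if frac a < frac b then 1 else 0)"
proof -
  have fa: "a = of_int (floor a) + frac a" and fb: "b = of_int (floor b) + frac b"
    by (simp_all add: frac_def)
  have r: "0 \<le> frac a" "frac a < 1" "0 \<le> frac b" "frac b < 1"
    by (simp_all add: frac_lt_1)
  show ?thesis
  proof (cases "frac a < frac b")
    case True
    have "of_int (floor a - floor b - 1) \<le> a - b" "a - b < of_int (floor a - floor b - 1) + 1"
      using True r fa fb by (simp_all only: of_int_diff of_int_1; linarith)+
    then show ?thesis using True by (simp add: floor_unique)
  next
    case False
    have "of_int (floor a - floor b) \<le> a - b" "a - b < of_int (floor a - floor b) + 1"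
      using False r fa fb by (simp_all only: of_int_diff of_int_1; linarith)+
    then show ?thesis using False by (simp add: floor_unique)
  qed
qed

lemma frac_ne_nonint:
  fixes a b :: real
  shows "frac a \<noteq> frac b \<longleftrightarrow> a - b \<notin> \<int>"
proof
  assume "frac a \<noteq> frac b"
  show "a - b \<notin> \<int>"
  proof
    assume "a - b \<in> \<int>"
    then have "frac (b + (a - b)) = frac b" by (rule frac_add_int_right)
    then show False using \<open>frac a \<noteq> frac b\<close> by simp
  qed
next
  assume "a - b \<notin> \<int>"
  show "frac a \<noteq> frac b"
  proof
    assume "frac a = frac b"
    then have "a - b = of_int (floor a) - of_int (floor b)" by (simp add: frac_def)
    then have "a - b = of_int (floor a - floor b)" by simp
    then show False using \<open>a - b \<notin> \<int>\<close> by (metis Ints_of_int)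
  qed
qed

definition sameE :: "'a set set \<Rightarrow> ('a \<Rightarrow> real) \<Rightarrow> ('a \<Rightarrow> real) \<Rightarrow> bool" where
  "sameE E x y \<longleftrightarrow> (\<forall>k l. {k, l} \<in> E \<longrightarrow> floor (x k - x l) = floor (y k - y l))"

definition cEq :: "'a set \<Rightarrow> 'a set set \<Rightarrow> ('a \<Rightarrow> real) \<Rightarrow> ('a \<Rightarrow> real) \<Rightarrow> bool" where
  "cEq V E x y \<longleftrightarrow> (\<exists>zi::'a \<Rightarrow> int. (\<forall>u. u \<notin> V \<longrightarrow> zi u = 0) \<and>
      (\<forall>k l. {k, l} \<in> E \<longrightarrow> floor (x k - x l) = floor (y k - y l) + zi k - zi l))"

lemma vpairsD: "{k, l} \<in> vpairs V \<Longrightarrow> k \<in> V \<and> l \<in> V \<and> k \<noteq> l"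
  unfolding vpairs_def by (auto simp: doubleton_eq_iff)

lemma orient_iff: "(a, b) \<in> orient_of E x \<longleftrightarrow> {a, b} \<in> E \<and> frac (x a) < frac (x b)"
  by (simp add: orient_of_def)

lemma complD: "x \<in> tor_complement V E \<Longrightarrow> {k, l} \<in> E \<Longrightarrow> frac (x k) \<noteq> frac (x l)"
  by (auto simp: tor_complement_def frac_ne_nonint)

lemma flip_at_iff: "(a, b) \<in> flip_at v w \<longleftrightarrow>
   ((a, b) \<in> w \<and> a \<noteq> v \<and> b \<noteq> v) \<or> (b = v \<and> (v, a) \<in> w) \<or> (a = v \<and> (b, v) \<in> w)"
  unfolding flip_at_def by blast

lemma flipgen:
  assumes Ev: "E \<subseteq> vpairs V"
    and x: "x \<in> tor_complement V E" and x': "x' \<in> tor_complement V E"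
    and oth: "\<And>k l. {k, l} \<in> E \<Longrightarrow> k \<noteq> v \<Longrightarrow> l \<noteq> v \<Longrightarrow>
                (frac (x' k) < frac (x' l) \<longleftrightarrow> frac (x k) < frac (x l))"
    and atv: "\<And>b. {v, b} \<in> E \<Longrightarrow> (frac (x' v) < frac (x' b) \<longleftrightarrow> frac (x b) < frac (x v))"
  shows "orient_of E x' = flip_at v (orient_of E x)"
proof (intro set_eqI)
  fix e :: "'a \<times> 'a"
  obtain a b where ab: "e = (a, b)" by (cases e)
  have "(a, b) \<in> orient_of E x' \<longleftrightarrow> (a, b) \<in> flip_at v (orient_of E x)"
  proof (cases "{a, b} \<in> E")
    case False
    then show ?thesis unfolding flip_at_iff orient_iff by (auto simp: insert_commute)
  next
    case E1: True
    have nab: "a \<noteq> b" using vpairsD[of a b V] E1 Ev by auto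
    have d1: "frac (x a) \<noteq> frac (x b)" using complD[OF x E1] .
    have d2: "frac (x' a) \<noteq> frac (x' b)" using complD[OF x' E1] .
    show ?thesis
    proof (cases "a = v")
      case True
      have "frac (x' v) < frac (x' b) \<longleftrightarrow> frac (x b) < frac (x v)" using atv E1 True by simp
      then show ?thesis using True nab E1 unfolding flip_at_iff orient_iff by (auto simp: insert_commute)
    next
      case av: False
      show ?thesis
      proof (cases "b = v")
        case True
        have Ev': "{v, a} \<in> E" using E1 True by (simp add: insert_commute)
        have "frac (x' v) < frac (x' a) \<longleftrightarrow> frac (x a) < frac (x v)" using atv[OF Ev'] .
        then have "frac (x' a) < frac (x' v) \<longleftrightarrow> frac (x v) < frac (x a)"
          using d1 d2 True by auto
        then show ?thesis using True av E1 Ev' unfolding flip_at_iff orient_iff by (auto simp: insert_commute)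
      next
        case bv: False
        show ?thesis using oth[OF E1 av bv] av bv E1 unfolding flip_at_iff orient_iff by auto
      qed
    qed
  qed
  then show "e \<in> orient_of E x' \<longleftrightarrow> e \<in> flip_at v (orient_of E x)" using ab by simp
qed

lemma fl_fr:
  fixes r :: real
  assumes "0 \<le> r" "r < 1"
  shows "floor (of_int k + r) = k \<and> frac (of_int k + r) = r"
proof
  show "floor (of_int k + r) = k" using assms by (intro floor_unique) auto
  then show "frac (of_int k + r) = r" by (simp add: frac_def)
qed

lemma Max_frac:
  assumes "finite V" "v \<in> V"
  shows "Max ((\<lambda>u. frac (x u)) ` V) < 1 \<and> (\<forall>u\<in>V. frac (x u) \<le> Max ((\<lambda>u. frac (x u)) ` V))
     \<and> 0 \<le> Max ((\<lambda>u. frac (x u)) ` V)"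
proof -
  let ?S = "(\<lambda>u. frac (x u)) ` V"
  have fin: "finite ?S" and ne: "?S \<noteq> {}" using assms by auto
  have "Max ?S \<in> ?S" using Max_in[OF fin ne] .
  then have "Max ?S < 1" using frac_lt_1 by auto
  moreover have "\<forall>u\<in>V. frac (x u) \<le> Max ?S" using Max_ge[OF fin] by auto
  moreover have "0 \<le> Max ?S" using calculation(2) assms(2) frac_ge_0[of "x v"] by (meson order_trans)
  ultimately show ?thesis by blast
qed

lemma neighbor_in:
  assumes "E \<subseteq> vpairs V" "{v, b} \<in> E"
  shows "v \<in> V \<and> b \<in> V \<and> v \<noteq> b"
proof -
  have "{v, b} \<in> vpairs V" using assms(1) assms(2) by (rule subsetD)
  then show ?thesis by (rule vpairsD)
qed

lemma fwd:
  assumes fin: "finite V" and Ev: "E \<subseteq> vpairs V" and x: "x \<in> tor_complement V E" and vV: "v \<in> V"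
    and src: "\<forall>u. (u, v) \<notin> orient_of E x"
  shows "\<exists>x'. x' \<in> tor_complement V E \<and> orient_of E x' = flip_at v (orient_of E x) \<and> sameE E x' x
     \<and> floor (x' v) = floor (x v) - 1 \<and> (\<forall>u. u \<noteq> v \<longrightarrow> x' u = x u)"
proof -
  define M where "M = Max ((\<lambda>u. frac (x u)) ` V)"
  have MM: "M < 1" "\<forall>u\<in>V. frac (x u) \<le> M" "0 \<le> M" using Max_frac[OF fin vV, of x] unfolding M_def by auto
  define th where "th = (1 + M) / 2"
  have th: "0 \<le> th" "th < 1" "\<And>u. u \<in> V \<Longrightarrow> frac (x u) < th" using MM unfolding th_def by fastforce+
  define x' where "x' = x(v := of_int (floor (x v) - 1) + th)"
  have x'v: "floor (x' v) = floor (x v) - 1" "frac (x' v) = th"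
    using fl_fr[OF th(1,2), of "floor (x v) - 1"] unfolding x'_def by auto
  have x'o: "\<And>u. u \<noteq> v \<Longrightarrow> x' u = x u" unfolding x'_def by simp
  have nb: "b \<in> V \<and> b \<noteq> v \<and> frac (x v) < frac (x b)" if "{v, b} \<in> E" for b
  proof -
    have bV: "b \<in> V" "v \<noteq> b" using neighbor_in[OF Ev that] by auto
    have "(b, v) \<notin> orient_of E x" using src by blast
    then have "\<not> frac (x b) < frac (x v)" using that by (auto simp: orient_iff insert_commute)
    moreover have "frac (x v) \<noteq> frac (x b)" using complD[OF x that] .
    ultimately show ?thesis using bV by auto
  qed
  have xC: "x \<in> RV V" "\<And>k l. {k, l} \<in> E \<Longrightarrow> x k - x l \<notin> \<int>" using x by (auto simp: tor_complement_def)
  have diffv: "x' k - x' l \<notin> \<int>" if kl: "{k, l} \<in> E" for k l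
  proof (cases "k = v \<or> l = v")
    case False then show ?thesis using xC(2)[OF kl] x'o by simp
  next
    case True
    show ?thesis
    proof (cases "k = v")
      case True
      have n: "l \<in> V" "l \<noteq> v" using nb[of l] kl True by auto
      have "frac (x' l) < th" using x'o[OF n(2)] th(3)[OF n(1)] by simp
      then have "frac (x' k) \<noteq> frac (x' l)" using x'v(2) True by simp
      then show ?thesis by (simp add: frac_ne_nonint)
    next
      case False
      then have lv: "l = v" using True by simp
      have "{v, k} \<in> E" using kl lv by (simp add: insert_commute)
      then have n: "k \<in> V" "k \<noteq> v" using nb[of k] by auto
      have "frac (x' k) < th" using x'o[OF n(2)] th(3)[OF n(1)] by simp
      then have "frac (x' k) \<noteq> frac (x' l)" using x'v(2) lv by simp
      then show ?thesis by (simp add: frac_ne_nonint)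
    qed
  qed
  have x'C: "x' \<in> tor_complement V E"
  proof -
    have "x' u = 0" if "u \<notin> V" for u
    proof -
      have "u \<noteq> v" using that vV by auto
      then have "x' u = x u" by (rule x'o)
      also have "x u = 0" using xC(1) that unfolding RV_def by simp
      finally show ?thesis .
    qed
    then show ?thesis using diffv unfolding tor_complement_def RV_def by auto
  qed
  have same: "sameE E x' x" unfolding sameE_def
  proof (intro allI impI)
    fix k l assume kl: "{k, l} \<in> E"
    show "floor (x' k - x' l) = floor (x k - x l)"
    proof (cases "k = v \<or> l = v")
      case False then show ?thesis using x'o by simp
    next
      case True
      show ?thesis
      proof (cases "k = v")
        case True
        have n: "l \<in> V" "l \<noteq> v" "frac (x v) < frac (x l)" using nb[of l] kl True by auto
        have "floor (x' k - x' l) = floor (x v) - 1 - floor (x l)"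
          using floor_diff_frac[of "x' v" "x' l"] True x'v x'o[of l] n th(3)[of l] by auto
        moreover have "floor (x k - x l) = floor (x v) - floor (x l) - 1"
          using floor_diff_frac[of "x v" "x l"] True n by auto
        ultimately show ?thesis by simp
      next
        case False
        then have lv: "l = v" using True by simp
        have "{v, k} \<in> E" using kl lv by (simp add: insert_commute)
        then have n: "k \<in> V" "k \<noteq> v" "frac (x v) < frac (x k)" using nb[of k] by auto
        have "floor (x' k - x' l) = floor (x k) - (floor (x v) - 1) - 1"
          using floor_diff_frac[of "x' k" "x' v"] lv x'v x'o[of k] n th(3)[of k] by auto
        moreover have "floor (x k - x l) = floor (x k) - floor (x v)"
          using floor_diff_frac[of "x k" "x v"] lv n by auto
        ultimately show ?thesis by simp
      qed
    qed
  qed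
  have ori: "orient_of E x' = flip_at v (orient_of E x)"
  proof (rule flipgen[OF Ev x x'C])
    fix k l assume "{k, l} \<in> E" "k \<noteq> v" "l \<noteq> v"
    then show "frac (x' k) < frac (x' l) \<longleftrightarrow> frac (x k) < frac (x l)" using x'o by simp
  next
    fix b assume b: "{v, b} \<in> E"
    then have n: "b \<in> V" "b \<noteq> v" "frac (x v) < frac (x b)" using nb by auto
    have "\<not> frac (x' v) < frac (x' b)" using x'v x'o[of b] n th(3)[of b] by auto
    moreover have "\<not> frac (x b) < frac (x v)" using n by auto
    ultimately show "frac (x' v) < frac (x' b) \<longleftrightarrow> frac (x b) < frac (x v)" by blast
  qed
  show ?thesis using x'C ori same x'v x'o by blast
qed


lemma bwd:
  assumes fin: "finite V" and Ev: "E \<subseteq> vpairs V" and x: "x \<in> tor_complement V E" and vV: "v \<in> V"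
    and snk: "\<forall>b. (v, b) \<notin> orient_of E x"
  shows "\<exists>x'. x' \<in> tor_complement V E \<and> orient_of E x' = flip_at v (orient_of E x) \<and> sameE E x' x"
proof -
  define M where "M = Max ((\<lambda>u. frac (x u)) ` V)"
  have MM: "M < 1" "\<forall>u\<in>V. frac (x u) \<le> M" "0 \<le> M" using Max_frac[OF fin vV, of x] unfolding M_def by auto
  define et where "et = (1 - M) / 2"
  have et: "0 < et" "\<And>u. u \<in> V \<Longrightarrow> frac (x u) + et < 1"
  proof -
    show "0 < et" using MM unfolding et_def by simp
    fix u assume "u \<in> V"
    then have "frac (x u) \<le> M" using MM by blast
    then show "frac (x u) + et < 1" using MM(1) unfolding et_def by (simp add: field_simps)
  qed
  define x' where "x' = (\<lambda>u. if u = v then of_int (floor (x v) + 1) else if u \<in> V then x u + et else 0)"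
  have x'v: "floor (x' v) = floor (x v) + 1" "frac (x' v) = 0" unfolding x'_def by auto
  have x'o: "floor (x' u) = floor (x u) \<and> frac (x' u) = frac (x u) + et \<and> x' u = x u + et"
    if "u \<in> V" "u \<noteq> v" for u
  proof -
    have eq: "x u + et = of_int (floor (x u)) + (frac (x u) + et)" by (simp add: frac_def)
    have "0 \<le> frac (x u) + et" using et(1) frac_ge_0[of "x u"] by linarith
    then have "floor (x u + et) = floor (x u) \<and> frac (x u + et) = frac (x u) + et"
      unfolding eq using fl_fr[of "frac (x u) + et" "floor (x u)"] et(2)[OF that(1)] by blast
    then show ?thesis using that unfolding x'_def by simp
  qed
  have nb: "b \<in> V \<and> b \<noteq> v \<and> frac (x b) < frac (x v)" if "{v, b} \<in> E" for b
  proof -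
    have bV: "b \<in> V" "v \<noteq> b" using neighbor_in[OF Ev that] by auto
    have "(v, b) \<notin> orient_of E x" using snk by blast
    then have "\<not> frac (x v) < frac (x b)" using that by (auto simp: orient_iff)
    moreover have "frac (x v) \<noteq> frac (x b)" using complD[OF x that] .
    ultimately show ?thesis using bV by auto
  qed
  have xC: "x \<in> RV V" "\<And>k l. {k, l} \<in> E \<Longrightarrow> x k - x l \<notin> \<int>" using x by (auto simp: tor_complement_def)
  have pos: "0 < frac (x' u)" if "u \<in> V" "u \<noteq> v" for u
    using x'o[OF that] et(1) frac_ge_0[of "x u"] by linarith
  have same_nv: "x' k - x' l = x k - x l" if kl: "{k, l} \<in> E" "k \<noteq> v" "l \<noteq> v" for k l
  proof -
    have "k \<in> V" "l \<in> V" using neighbor_in[OF Ev kl(1)] by auto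
    then show ?thesis using x'o kl by simp
  qed
  have diffv: "x' k - x' l \<notin> \<int>" if kl: "{k, l} \<in> E" for k l
  proof (cases "k = v \<or> l = v")
    case False then show ?thesis using xC(2)[OF kl] same_nv[OF kl] by simp
  next
    case True
    show ?thesis
    proof (cases "k = v")
      case True
      have n: "l \<in> V" "l \<noteq> v" using nb[of l] kl True by auto
      have "frac (x' k) = 0" using x'v(2) True by simp
      then have "frac (x' k) \<noteq> frac (x' l)" using pos[OF n] by (metis less_irrefl)
      then show ?thesis by (simp add: frac_ne_nonint)
    next
      case False
      then have lv: "l = v" using True by simp
      have "{v, k} \<in> E" using kl lv by (simp add: insert_commute)
      then have n: "k \<in> V" "k \<noteq> v" using nb[of k] by auto
      have "frac (x' l) = 0" using x'v(2) lv by simp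
      then have "frac (x' k) \<noteq> frac (x' l)" using pos[OF n] by (metis less_irrefl)
      then show ?thesis by (simp add: frac_ne_nonint)
    qed
  qed
  have x'C: "x' \<in> tor_complement V E"
  proof -
    have "x' u = 0" if "u \<notin> V" for u using that vV unfolding x'_def by auto
    then show ?thesis using diffv unfolding tor_complement_def RV_def by auto
  qed
  have same: "sameE E x' x" unfolding sameE_def
  proof (intro allI impI)
    fix k l assume kl: "{k, l} \<in> E"
    show "floor (x' k - x' l) = floor (x k - x l)"
    proof (cases "k = v \<or> l = v")
      case False then show ?thesis using same_nv[OF kl] by simp
    next
      case True
      show ?thesis
      proof (cases "k = v")
        case True
        have n: "l \<in> V" "l \<noteq> v" "frac (x l) < frac (x v)" using nb[of l] kl True by auto
        have c: "frac (x' v) < frac (x' l)" using pos[OF n(1,2)] unfolding x'v(2) .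
        have "floor (x' k - x' l) = floor (x' v) - floor (x' l) - 1"
          using floor_diff_frac[of "x' v" "x' l"] c True by simp
        moreover have "floor (x' l) = floor (x l)" using x'o[OF n(1,2)] by blast
        ultimately have "floor (x' k - x' l) = floor (x v) + 1 - floor (x l) - 1"
          using x'v(1) by linarith
        moreover have "floor (x k - x l) = floor (x v) - floor (x l)"
          using floor_diff_frac[of "x v" "x l"] True n by auto
        ultimately show ?thesis by simp
      next
        case False
        then have lv: "l = v" using True by simp
        have "{v, k} \<in> E" using kl lv by (simp add: insert_commute)
        then have n: "k \<in> V" "k \<noteq> v" "frac (x k) < frac (x v)" using nb[of k] by auto
        have c: "\<not> frac (x' k) < frac (x' v)" using pos[OF n(1,2)] unfolding x'v(2) by (meson less_asym)
        have "floor (x' k - x' l) = floor (x' k) - floor (x' v)"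
          using floor_diff_frac[of "x' k" "x' v"] c lv by simp
        moreover have "floor (x' k) = floor (x k)" using x'o[OF n(1,2)] by blast
        ultimately have "floor (x' k - x' l) = floor (x k) - (floor (x v) + 1)"
          using x'v(1) by linarith
        moreover have "floor (x k - x l) = floor (x k) - floor (x v) - 1"
          using floor_diff_frac[of "x k" "x v"] lv n by auto
        ultimately show ?thesis by simp
      qed
    qed
  qed
  have ori: "orient_of E x' = flip_at v (orient_of E x)"
  proof (rule flipgen[OF Ev x x'C])
    fix k l assume kl: "{k, l} \<in> E" "k \<noteq> v" "l \<noteq> v"
    then have "k \<in> V" "l \<in> V" using neighbor_in[OF Ev kl(1)] by auto
    then have "frac (x' k) = frac (x k) + et" "frac (x' l) = frac (x l) + et" using x'o kl(2,3) by blast+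
    then show "frac (x' k) < frac (x' l) \<longleftrightarrow> frac (x k) < frac (x l)" by simp
  next
    fix b assume b: "{v, b} \<in> E"
    then have n: "b \<in> V" "b \<noteq> v" "frac (x b) < frac (x v)" using nb by auto
    have "frac (x' v) < frac (x' b)" using pos[OF n(1,2)] unfolding x'v(2) .
    then show "frac (x' v) < frac (x' b) \<longleftrightarrow> frac (x b) < frac (x v)" using n by blast
  qed
  show ?thesis using x'C ori same by blast
qed

definition Rr :: "'a set \<Rightarrow> ('a \<times> 'a) set \<Rightarrow> ('a \<times> 'a) set \<Rightarrow> bool" where
  "Rr V = sup (flip_step V) (flip_step V)\<inverse>\<inverse>"

lemma tor_class_iff: "w' \<in> tor_class V w \<longleftrightarrow> (Rr V)\<^sup>*\<^sup>* w w'"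
  by (simp add: tor_class_def Rr_def)

lemma Rr_iff: "Rr V a b \<longleftrightarrow> flip_step V a b \<or> flip_step V b a"
  by (simp add: Rr_def)

lemma Rr_sym: "Rr V a b \<Longrightarrow> Rr V b a"
  by (auto simp: Rr_iff)

lemma Rrs_sym: "(Rr V)\<^sup>*\<^sup>* a b \<Longrightarrow> (Rr V)\<^sup>*\<^sup>* b a"
proof (induction rule: rtranclp_induct)
  case base then show ?case by simp
next
  case (step y z)
  then show ?case using Rr_sym[OF step(2)] by (meson converse_rtranclp_into_rtranclp)
qed

lemma flip_invol: "flip_at v (flip_at v w) = w"
proof (intro set_eqI)
  fix e :: "'a \<times> 'a"
  obtain a b where "e = (a, b)" by (cases e)
  moreover have "(a, b) \<in> flip_at v (flip_at v w) \<longleftrightarrow> (a, b) \<in> w" unfolding flip_at_iff by auto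
  ultimately show "e \<in> flip_at v (flip_at v w) \<longleftrightarrow> e \<in> w" by simp
qed

lemma step_back:
  assumes fin: "finite V" and Ev: "E \<subseteq> vpairs V" and R: "Rr V wa wb"
    and x2: "x2 \<in> tor_complement V E" "orient_of E x2 = wb"
  shows "\<exists>xa. xa \<in> tor_complement V E \<and> orient_of E xa = wa \<and> sameE E xa x2"
proof -
  consider "flip_step V wa wb" | "flip_step V wb wa" using R by (auto simp: Rr_iff)
  then show ?thesis
  proof cases
    case 1
    then obtain v where src: "is_source V wa v" and wb: "wb = flip_at v wa" by (auto simp: flip_step_def)
    have vV: "v \<in> V" using src by (simp add: is_source_def)
    have snk: "\<forall>b. (v, b) \<notin> orient_of E x2"
      using src unfolding x2(2) wb flip_at_iff is_source_def by auto
    obtain xa where "xa \<in> tor_complement V E" "orient_of E xa = flip_at v (orient_of E x2)" "sameE E xa x2"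
      using bwd[OF fin Ev x2(1) vV snk] by blast
    then show ?thesis unfolding x2(2) wb flip_invol by blast
  next
    case 2
    then obtain v where src: "is_source V wb v" and wa: "wa = flip_at v wb" by (auto simp: flip_step_def)
    have vV: "v \<in> V" using src by (simp add: is_source_def)
    have s: "\<forall>u. (u, v) \<notin> orient_of E x2" using src unfolding x2(2) is_source_def by auto
    obtain xa where "xa \<in> tor_complement V E" "orient_of E xa = flip_at v (orient_of E x2)" "sameE E xa x2"
      using fwd[OF fin Ev x2(1) vV s] by blast
    then show ?thesis unfolding x2(2) wa by blast
  qed
qed

lemma realize:
  assumes fin: "finite V" and Ev: "E \<subseteq> vpairs V" and R: "(Rr V)\<^sup>*\<^sup>* w0 w'"
    and x: "x \<in> tor_complement V E" "orient_of E x = w0"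
  shows "\<exists>x'. x' \<in> tor_complement V E \<and> orient_of E x' = w'"
  using R
proof (induction rule: rtranclp_induct)
  case base then show ?case using x by blast
next
  case (step y z)
  then obtain xy where "xy \<in> tor_complement V E" "orient_of E xy = y" by blast
  then show ?case using step_back[OF fin Ev Rr_sym[OF step(2)]] by blast
qed

lemma same_orient_cEq:
  assumes x: "x \<in> tor_complement V E" and y: "y \<in> tor_complement V E"
    and o: "orient_of E x = orient_of E y"
  shows "cEq V E x y"
  unfolding cEq_def
proof (intro exI[of _ "\<lambda>u. floor (x u) - floor (y u)"] conjI allI impI)
  fix u assume "u \<notin> V"
  then show "floor (x u) - floor (y u) = 0" using x y by (simp add: tor_complement_def RV_def)
next
  fix k l assume kl: "{k, l} \<in> E"
  have "(k, l) \<in> orient_of E x \<longleftrightarrow> (k, l) \<in> orient_of E y" using o by simp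
  then have "frac (x k) < frac (x l) \<longleftrightarrow> frac (y k) < frac (y l)" using kl by (simp add: orient_iff)
  then show "floor (x k - x l) = floor (y k - y l) + (floor (x k) - floor (y k)) - (floor (x l) - floor (y l))"
    using floor_diff_frac[of "x k" "x l"] floor_diff_frac[of "y k" "y l"] by auto
qed

lemma class_cEq:
  assumes fin: "finite V" and Ev: "E \<subseteq> vpairs V" and R: "(Rr V)\<^sup>*\<^sup>* w1 w2"
    and x1: "x1 \<in> tor_complement V E" "orient_of E x1 = w1"
  shows "x2 \<in> tor_complement V E \<Longrightarrow> orient_of E x2 = w2 \<Longrightarrow> cEq V E x2 x1"
  using R
proof (induction arbitrary: x2 rule: rtranclp_induct)
  case base
  then show ?case using same_orient_cEq[of x2 V E x1] x1 by simp
next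
  case (step wa wb)
  obtain xa where xa: "xa \<in> tor_complement V E" "orient_of E xa = wa" "sameE E xa x2"
    using step_back[OF fin Ev step(2) step(4,5)] by blast
  have "cEq V E xa x1" using step(3)[OF xa(1,2)] .
  then show ?case using xa(3) unfolding cEq_def sameE_def by metis
qed


lemma pretzel_aux:
  assumes fin: "finite V" and Ev: "E \<subseteq> vpairs V" and p: "p \<in> tor_complement V E"
  shows "\<forall>y. y \<in> tor_complement V E \<longrightarrow> sameE E y p \<longrightarrow>
     (\<forall>u\<in>V. m \<le> floor (y u) - floor (p u)) \<longrightarrow>
     (\<Sum>u\<in>V. nat (floor (y u) - floor (p u) - m)) = n \<longrightarrow> (Rr V)\<^sup>*\<^sup>* (orient_of E p) (orient_of E y)"
proof (induction n rule: less_induct)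
  case (less n)
  show ?case
  proof (intro allI impI)
    fix y assume yC: "y \<in> tor_complement V E" and sy: "sameE E y p"
      and mb: "\<forall>u\<in>V. m \<le> floor (y u) - floor (p u)"
      and sn: "(\<Sum>u\<in>V. nat (floor (y u) - floor (p u) - m)) = n"
    define g where "g = (\<lambda>u. floor (y u) - floor (p u))"
    have gedge: "g k - g l = (if frac (y k) < frac (y l) then 1 else 0) - (if frac (p k) < frac (p l) then 1 else 0)"
      if kl: "{k, l} \<in> E" for k l
    proof -
      have "floor (y k - y l) = floor (p k - p l)" using sy kl by (simp add: sameE_def)
      then show ?thesis using floor_diff_frac[of "y k" "y l"] floor_diff_frac[of "p k" "p l"]
        unfolding g_def by linarith
    qed
    show "(Rr V)\<^sup>*\<^sup>* (orient_of E p) (orient_of E y)"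
    proof (cases "\<forall>u\<in>V. \<forall>w\<in>V. g u = g w")
      case True
      have "orient_of E y = orient_of E p"
      proof (intro set_eqI)
        fix e :: "'a \<times> 'a"
        obtain a b where ab: "e = (a, b)" by (cases e)
        have "(a, b) \<in> orient_of E y \<longleftrightarrow> (a, b) \<in> orient_of E p"
        proof (cases "{a, b} \<in> E")
          case False then show ?thesis by (simp add: orient_iff)
        next
          case E1: True
          have "a \<in> V" "b \<in> V" using neighbor_in[OF Ev E1] by auto
          then have "g a = g b" using True by blast
          then have "(frac (y a) < frac (y b)) = (frac (p a) < frac (p b))"
            using gedge[OF E1] by (auto split: if_splits)
          then show ?thesis using E1 by (simp add: orient_iff)
        qed
        then show "e \<in> orient_of E y \<longleftrightarrow> e \<in> orient_of E p" using ab by simp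
      qed
      then show ?thesis by simp
    next
      case False
      then have Vne: "V \<noteq> {}" by blast
      define Mx where "Mx = Max (g ` V)"
      have Mge: "\<And>u. u \<in> V \<Longrightarrow> g u \<le> Mx" unfolding Mx_def using fin by simp
      have MxIn: "Mx \<in> g ` V" unfolding Mx_def using fin Vne by simp
      obtain u0 where u0: "u0 \<in> V" "g u0 < Mx"
      proof -
        have "\<not> (\<forall>u\<in>V. g u = Mx)" using False by metis
        then obtain u0 where "u0 \<in> V" "g u0 \<noteq> Mx" by blast
        then show ?thesis using Mge that by force
      qed
      define S where "S = {u \<in> V. g u = Mx}"
      have Sfin: "finite S" and Sne: "S \<noteq> {}" using fin MxIn unfolding S_def by auto
      define mf where "mf = Min ((\<lambda>u. frac (y u)) ` S)"
      have "mf \<in> (\<lambda>u. frac (y u)) ` S" unfolding mf_def using Sfin Sne by simp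
      then obtain v where vS: "v \<in> S" and vmin: "frac (y v) = mf" by auto
      have mfle: "\<And>u. u \<in> S \<Longrightarrow> mf \<le> frac (y u)" unfolding mf_def using Sfin by simp
      have vV: "v \<in> V" and gv: "g v = Mx" using vS unfolding S_def by auto
      have src: "\<forall>u. (u, v) \<notin> orient_of E y"
      proof (intro allI notI)
        fix u assume uv: "(u, v) \<in> orient_of E y"
        then have E1: "{u, v} \<in> E" and lt: "frac (y u) < frac (y v)" by (auto simp: orient_iff)
        have uV: "u \<in> V" using neighbor_in[OF Ev E1] by auto
        show False
        proof (cases "g u = Mx")
          case True
          then have "u \<in> S" using uV unfolding S_def by simp
          then show False using mfle[of u] vmin lt by simp
        next
          case False
          then have "g u < g v" using Mge[OF uV] gv by simp
          moreover have "g u - g v \<ge> 0" using gedge[OF E1] lt by simp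
          ultimately show False by simp
        qed
      qed
      obtain y' where y': "y' \<in> tor_complement V E" "orient_of E y' = flip_at v (orient_of E y)"
        "sameE E y' y" "floor (y' v) = floor (y v) - 1" "\<forall>u. u \<noteq> v \<longrightarrow> y' u = y u"
        using fwd[OF fin Ev yC vV src] by blast
      have sy': "sameE E y' p" using y'(3) sy unfolding sameE_def by simp
      define g' where "g' = (\<lambda>u. floor (y' u) - floor (p u))"
      have g'v: "g' v = g v - 1" using y'(4) unfolding g'_def g_def by simp
      have g'o: "\<And>u. u \<noteq> v \<Longrightarrow> g' u = g u" using y'(5) unfolding g'_def g_def by simp
      have mb': "\<forall>u\<in>V. m \<le> g' u"
      proof
        fix u assume uV: "u \<in> V"
        show "m \<le> g' u"
        proof (cases "u = v")
          case True
          have "m \<le> g u0" using mb u0(1) unfolding g_def by simp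
          then show ?thesis using True g'v gv u0(2) by simp
        next
          case False then show ?thesis using g'o mb uV unfolding g_def by simp
        qed
      qed
      have mv: "m < g v" using mb u0 gv unfolding g_def by force
      have s1: "(\<Sum>u\<in>V. nat (g u - m)) = nat (g v - m) + (\<Sum>u\<in>V - {v}. nat (g u - m))"
        using sum.remove[OF fin vV] .
      have s2: "(\<Sum>u\<in>V. nat (g' u - m)) = nat (g' v - m) + (\<Sum>u\<in>V - {v}. nat (g' u - m))"
        using sum.remove[OF fin vV] .
      have s3: "(\<Sum>u\<in>V - {v}. nat (g' u - m)) = (\<Sum>u\<in>V - {v}. nat (g u - m))"
        using g'o by (intro sum.cong) auto
      have sn': "(\<Sum>u\<in>V. nat (g' u - m)) < n"
        using s1 s2 s3 g'v mv sn unfolding g_def by simp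
      have IH: "(Rr V)\<^sup>*\<^sup>* (orient_of E p) (orient_of E y')"
        using less[OF sn'] y'(1) sy' mb' unfolding g'_def by blast
      have "flip_step V (orient_of E y) (orient_of E y')"
        unfolding flip_step_def is_source_def using vV src y'(2) by blast
      then have "Rr V (orient_of E y') (orient_of E y)" by (simp add: Rr_iff)
      with IH show ?thesis by (rule rtranclp.rtrancl_into_rtrancl)
    qed
  qed
qed

lemma pretzel:
  assumes fin: "finite V" and Ev: "E \<subseteq> vpairs V" and p: "p \<in> tor_complement V E"
    and y: "y \<in> tor_complement V E" and sy: "sameE E y p"
  shows "(Rr V)\<^sup>*\<^sup>* (orient_of E p) (orient_of E y)"
proof -
  define m where "m = - (\<Sum>u\<in>V. \<bar>floor (y u) - floor (p u)\<bar>)"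
  have "\<forall>u\<in>V. m \<le> floor (y u) - floor (p u)"
  proof
    fix u assume "u \<in> V"
    then have "\<bar>floor (y u) - floor (p u)\<bar> \<le> (\<Sum>u\<in>V. \<bar>floor (y u) - floor (p u)\<bar>)"
      using fin by (intro member_le_sum) auto
    then show "m \<le> floor (y u) - floor (p u)" unfolding m_def by linarith
  qed
  then show ?thesis using pretzel_aux[OF fin Ev p] y sy by blast
qed

inductive walk :: "('a \<Rightarrow> 'a \<Rightarrow> bool) \<Rightarrow> ('a \<Rightarrow> 'a \<Rightarrow> int) \<Rightarrow> 'a \<Rightarrow> 'a \<Rightarrow> int \<Rightarrow> nat \<Rightarrow> bool"
  for A w where
  wnil: "walk A w a a 0 0"
| wcons: "A a c \<Longrightarrow> walk A w c b W L \<Longrightarrow> walk A w a b (w a c + W) (Suc L)"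

lemma walk_app: "walk A w a k W1 L1 \<Longrightarrow> walk A w k b W2 L2 \<Longrightarrow> walk A w a b (W1 + W2) (L1 + L2)"
proof (induction rule: walk.induct)
  case (wnil a) then show ?case by simp
next
  case (wcons a c b' W L)
  have "walk A w a b (w a c + (W + W2)) (Suc (L + L2))" using wcons by (intro walk.wcons) auto
  then show ?case by (simp add: add.assoc)
qed

lemma walk_arc: "A a b \<Longrightarrow> walk A w a b (w a b) 1"
  using walk.wcons[OF _ walk.wnil, of A a b w] by simp

lemma walk_snoc: "walk A w a k W L \<Longrightarrow> A k b \<Longrightarrow> walk A w a b (W + w k b) (Suc L)"
  using walk_app[OF _ walk_arc, of A w a k W L b] by simp

lemma walk_mono: "walk A w a b W L \<Longrightarrow> (\<And>x y. A x y \<Longrightarrow> A' x y) \<Longrightarrow> walk A' w a b W L"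
  by (induction rule: walk.induct) (auto intro: walk.intros)

lemma walk_split:
  "walk A w a b W L \<Longrightarrow> walk A' w a b W L \<or>
    (\<exists>k l W1 L1 W2 L2. walk A' w a k W1 L1 \<and> A k l \<and> \<not> A' k l \<and> walk A w l b W2 L2
       \<and> W = W1 + w k l + W2 \<and> L = L1 + Suc L2)"
proof (induction rule: walk.induct)
  case (wnil a) then show ?case by (simp add: walk.wnil)
next
  case (wcons a c b W L)
  show ?case
  proof (cases "A' a c")
    case False
    have "walk A' w a a 0 0" by (rule walk.wnil)
    then show ?thesis using wcons False by fastforce
  next
    case True
    from wcons.IH show ?thesis
    proof
      assume "walk A' w c b W L"
      then show ?thesis using True by (auto intro: walk.wcons)
    next
      assume "\<exists>k l W1 L1 W2 L2. walk A' w c k W1 L1 \<and> A k l \<and> \<not> A' k l \<and> walk A w l b W2 L2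
       \<and> W = W1 + w k l + W2 \<and> L = L1 + Suc L2"
      then obtain k l W1 L1 W2 L2 where h: "walk A' w c k W1 L1" "A k l" "\<not> A' k l" "walk A w l b W2 L2"
        "W = W1 + w k l + W2" "L = L1 + Suc L2" by blast
      have "walk A' w a k (w a c + W1) (Suc L1)" using True h(1) by (rule walk.wcons)
      then show ?thesis using h by (intro disjI2 exI[of _ k] exI[of _ l] exI[of _ "w a c + W1"]
          exI[of _ "Suc L1"] exI[of _ W2] exI[of _ L2]) (auto simp: algebra_simps)
    qed
  qed
qed

lemma walk_lower:
  fixes p :: "'a \<Rightarrow> real"
  assumes "walk A w a b W L" "\<And>x y. A x y \<Longrightarrow> real_of_int (w x y) - (p x - p y) \<ge> s"
  shows "real_of_int W \<ge> p a - p b + real L * s"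
  using assms
proof (induction rule: walk.induct)
  case (wnil a) then show ?case by simp
next
  case (wcons a c b W L)
  have "real_of_int (w a c) - (p a - p c) \<ge> s" using wcons by blast
  moreover have "real_of_int W \<ge> p c - p b + real L * s" using wcons by blast
  ultimately show ?case by (simp add: algebra_simps)
qed

lemma walk_ub:
  fixes y :: "'a \<Rightarrow> real"
  assumes "walk A w a b W L" "\<And>x z. A x z \<Longrightarrow> y x - y z < real_of_int (w x z)"
  shows "(L = 0 \<and> a = b \<and> W = 0) \<or> (L > 0 \<and> y a - y b < real_of_int W)"
  using assms
proof (induction rule: walk.induct)
  case (wnil a) then show ?case by simp
next
  case (wcons a c b W L)
  have "y a - y c < real_of_int (w a c)" using wcons by blast
  moreover have "(L = 0 \<and> c = b \<and> W = 0) \<or> (L > 0 \<and> y c - y b < real_of_int W)" using wcons by blast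
  ultimately show ?case by auto
qed

lemma walk_L0: "walk A w a b W 0 \<Longrightarrow> a = b"
  by (erule walk.cases) auto

lemma walk_L1: "walk A w a b W (Suc 0) \<Longrightarrow> A a b"
  by (erule walk.cases) (auto dest: walk_L0)


lemma floor_neg_nonint:
  fixes x :: real
  assumes "x \<notin> \<int>"
  shows "floor (- x) = - floor x - 1"
proof -
  have b: "real_of_int (floor x) < x" "x < real_of_int (floor x) + 1" using nonint_floor_bounds[OF assms] by auto
  show ?thesis
  proof (rule floor_unique)
    have e: "real_of_int (- floor x - 1) = - real_of_int (floor x) - 1" by simp
    show "real_of_int (- floor x - 1) \<le> - x" unfolding e using b(2) by linarith
    show "- x < real_of_int (- floor x - 1) + 1" unfolding e using b(1) by linarith
  qed
qed

lemma alt_walk: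
  assumes fin: "finite V" and Gv: "G \<subseteq> vpairs V" and p: "p \<in> tor_complement V G"
    and eG: "{i, j} \<in> G" and red: "Qs V (G - {{i, j}}) p \<subseteq> Qs V G p"
  shows "\<exists>W L. walk (\<lambda>k l. {k, l} \<in> G - {{i, j}}) (\<lambda>k l. floor (p k - p l) + 1) i j W L
            \<and> W \<le> floor (p i - p j) + 1"
proof (rule ccontr)
  assume nw: "\<not> ?thesis"
  define A where "A = (\<lambda>k l. {k, l} \<in> G - {{i, j}})"
  define w where "w = (\<lambda>k l. floor (p k - p l) + 1)"
  have nw': "\<And>W L. walk A w i j W L \<Longrightarrow> W > w i j" using nw unfolding A_def w_def by force
  have Asym: "\<And>k l. A k l \<Longrightarrow> A l k" unfolding A_def by (simp add: insert_commute)
  have AV: "k \<in> V \<and> l \<in> V \<and> k \<noteq> l" if "A k l" for k l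
  proof -
    have "{k, l} \<in> G" using that unfolding A_def by simp
    then show ?thesis by (rule neighbor_in[OF Gv])
  qed
  have pRV: "\<And>u. u \<notin> V \<Longrightarrow> p u = 0" using p by (simp add: tor_complement_def RV_def)
  have pn: "\<And>k l. {k, l} \<in> G \<Longrightarrow> p k - p l \<notin> \<int>" using p by (simp add: tor_complement_def)
  have slack: "\<And>x y. A x y \<Longrightarrow> real_of_int (w x y) - (p x - p y) \<ge> 0"
    unfolding w_def by (simp add: add.commute) linarith
  have lowb: "real_of_int W \<ge> p a - p b" if "walk A w a b W L" for a b W L
    using walk_lower[OF that slack] by simp
  define R where "R = {l. \<exists>W L. walk A w i l W L}"
  have exmin: "\<exists>W0. (\<exists>L. walk A w i l W0 L) \<and> (\<forall>W L. walk A w i l W L \<longrightarrow> W0 \<le> W)" if "l \<in> R" for l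
  proof -
    have "\<exists>W L. walk A w i l W L" using that unfolding R_def by (rule CollectD)
    then obtain W L where wl: "walk A w i l W L" by blast
    define b where "b = floor (p i - p l)"
    have geb: "\<And>W L. walk A w i l W L \<Longrightarrow> b \<le> W"
    proof -
      fix W L assume "walk A w i l W L"
      then have "real_of_int W \<ge> p i - p l" by (rule lowb)
      then show "b \<le> W" unfolding b_def by linarith
    qed
    obtain q where q: "(\<lambda>(W, L). walk A w i l W L) q"
      "\<forall>y. (\<lambda>(W, L). walk A w i l W L) y \<longrightarrow> (\<lambda>(W, L). nat (W - b)) q \<le> (\<lambda>(W, L). nat (W - b)) y"
      using ex_has_least_nat[of "\<lambda>(W, L). walk A w i l W L" "(W, L)" "\<lambda>(W, L). nat (W - b)"] wl by auto
    obtain W0 L0 where q0: "q = (W0, L0)" by (cases q)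
    have "\<forall>W L. walk A w i l W L \<longrightarrow> W0 \<le> W"
    proof (intro allI impI)
      fix W L assume h: "walk A w i l W L"
      then have "nat (W0 - b) \<le> nat (W - b)" using q(2) q0 by auto
      moreover have "b \<le> W0" using geb q(1) q0 by auto
      moreover have "b \<le> W" using geb h by auto
      ultimately show "W0 \<le> W" by linarith
    qed
    then show ?thesis using q(1) q0 by auto
  qed
  define d where "d = (\<lambda>l. SOME W0. (\<exists>L. walk A w i l W0 L) \<and> (\<forall>W L. walk A w i l W L \<longrightarrow> W0 \<le> W))"
  have dprop: "(\<exists>L. walk A w i l (d l) L) \<and> (\<forall>W L. walk A w i l W L \<longrightarrow> d l \<le> W)" if "l \<in> R" for l
    unfolding d_def using someI_ex[OF exmin[OF that]] .
  have iR: "i \<in> R" unfolding R_def using walk.wnil[of A w i] by blast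
  have di: "d i = 0"
  proof -
    have "d i \<le> 0" using dprop[OF iR] walk.wnil[of A w i] by blast
    moreover obtain L where "walk A w i i (d i) L" using dprop[OF iR] by blast
    then have "real_of_int (d i) \<ge> p i - p i" by (rule lowb)
    then have "real_of_int (d i) \<ge> 0" by simp
    ultimately show ?thesis by simp
  qed
  have Rcl: "l \<in> R \<and> d l \<le> d k + w k l" if kR: "k \<in> R" and kl: "A k l" for k l
  proof -
    obtain L where "walk A w i k (d k) L" using dprop[OF kR] by blast
    then have wk: "walk A w i l (d k + w k l) (Suc L)" using kl by (rule walk_snoc)
    then have "l \<in> R" unfolding R_def by blast
    then show ?thesis using dprop[of l] wk by blast
  qed
  have ij: "i \<in> V" "j \<in> V" "i \<noteq> j" using neighbor_in[OF Gv eG] by auto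
  define Mc where "Mc = \<bar>real_of_int (w i j)\<bar> + \<bar>p j\<bar> + 1"
  define y where "y = (\<lambda>u. if u \<notin> V then 0 else if u \<in> R then - real_of_int (d u) else p u - Mc)"
  define y' where "y' = (\<lambda>u. (p u + y u) / 2)"
  have y'Q: "y' \<in> Qs V (G - {{i, j}}) p"
    unfolding Qs_def
  proof (intro CollectI conjI allI impI)
    show "y' \<in> RV V" unfolding RV_def y'_def y_def using pRV by simp
  next
    fix k l assume kl0: "{k, l} \<in> G - {{i, j}}"
    then have kl: "A k l" unfolding A_def .
    have kV: "k \<in> V" "l \<in> V" using AV[OF kl] by auto
    define a where "a = floor (p k - p l)"
    have pkl: "p k - p l \<notin> \<int>" using pn kl0 by blast
    have pb: "real_of_int a < p k - p l" "p k - p l < real_of_int a + 1"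
      using nonint_floor_bounds[OF pkl] unfolding a_def by auto
    have yb: "real_of_int a \<le> y k - y l \<and> y k - y l \<le> real_of_int a + 1"
    proof (cases "k \<in> R")
      case True
      have lR: "l \<in> R" and t1: "d l \<le> d k + w k l" using Rcl[OF True kl] by auto
      have t2: "d k \<le> d l + w l k" using Rcl[OF lR Asym[OF kl]] by auto
      have "p l - p k = - (p k - p l)" by simp
      then have "floor (p l - p k) = - a - 1" using floor_neg_nonint[OF pkl] unfolding a_def by simp
      then have wl: "w l k = - a" unfolding w_def by simp
      have wk: "w k l = a + 1" unfolding w_def a_def by simp
      have "y k - y l = real_of_int (d l - d k)" unfolding y_def using kV True lR by simp
      moreover have "a \<le> d l - d k" "d l - d k \<le> a + 1" using t1 t2 wl wk by linarith+
      ultimately show ?thesis by simp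
    next
      case False
      have "l \<notin> R" using Rcl[OF _ Asym[OF kl]] False by blast
      then have "y k - y l = p k - p l" unfolding y_def using kV False by simp
      then show ?thesis using pb by simp
    qed
    have "2 * (y' k - y' l) = (p k - p l) + (y k - y l)" unfolding y'_def by (simp add: field_simps)
    moreover have yb1: "real_of_int a \<le> y k - y l" and yb2: "y k - y l \<le> real_of_int a + 1" using yb by auto
    ultimately have c1: "real_of_int a < y' k - y' l" using pb by argo
    from yb1 yb2 pb \<open>2 * (y' k - y' l) = (p k - p l) + (y k - y l)\<close>
    have c2: "y' k - y' l < real_of_int a + 1" by argo
    from c1 c2 have "floor (y' k - y' l) = a \<and> y' k - y' l \<notin> \<int>" by (rule floor_between)
    then show "floor (y' k - y' l) = floor (p k - p l)" "y' k - y' l \<notin> \<int>" unfolding a_def by auto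
  qed
  have y'nQ: "y' \<notin> Qs V G p"
  proof
    assume "y' \<in> Qs V G p"
    then have fe: "floor (y' i - y' j) = floor (p i - p j)" using eG by (simp add: Qs_def)
    define a where "a = floor (p i - p j)"
    have wij: "w i j = a + 1" unfolding w_def a_def by simp
    have yi: "y i = 0" unfolding y_def using ij iR di by simp
    have yd: "y i - y j \<ge> real_of_int a + 2"
    proof (cases "j \<in> R")
      case True
      obtain L where "walk A w i j (d j) L" using dprop[OF True] by blast
      then have "d j > w i j" by (rule nw')
      then have "d j \<ge> a + 2" using wij by simp
      moreover have "y j = - real_of_int (d j)" unfolding y_def using ij True by simp
      ultimately show ?thesis using yi by simp
    next
      case False
      then have "y j = p j - Mc" unfolding y_def using ij by simp
      moreover have "real_of_int (w i j) \<le> \<bar>real_of_int (w i j)\<bar>" "- p j \<le> \<bar>p j\<bar>" by auto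
      ultimately show ?thesis using yi wij unfolding Mc_def by simp
    qed
    have pb: "real_of_int a \<le> p i - p j" unfolding a_def by simp
    have "2 * (y' i - y' j) = (p i - p j) + (y i - y j)" unfolding y'_def by (simp add: field_simps)
    then have "y' i - y' j \<ge> real_of_int a + 1" using pb yd by argo
    then have "floor (y' i - y' j) \<ge> a + 1" by linarith
    then show False using fe unfolding a_def by simp
  qed
  show False using y'Q y'nQ red by blast
qed


lemma redundant_all:
  assumes fin: "finite V" and Gv: "G \<subseteq> vpairs V" and p: "p \<in> tor_complement V G" and HG: "H \<subseteq> G"
    and red: "\<forall>e\<in>G - H. Qs V (G - {e}) p \<subseteq> Qs V G p"
  shows "Qs V H p \<subseteq> Qs V G p"
proof -
  define w where "w = (\<lambda>k l. floor (p k - p l) + 1)"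
  define AG where "AG = (\<lambda>k l. {k, l} \<in> G)"
  define AH where "AH = (\<lambda>k l. {k, l} \<in> H)"
  define sl where "sl = (\<lambda>k l. real_of_int (w k l) - (p k - p l))"
  have slpos: "\<And>k l. sl k l > 0" unfolding sl_def w_def by (simp add: add.commute) linarith
  define SL where "SL = (\<lambda>(k, l). sl k l) ` (V \<times> V)"
  have SLfin: "finite (insert 1 SL)" unfolding SL_def using fin by simp
  define s0 where "s0 = Min (insert 1 SL)"
  have s0pos: "s0 > 0"
  proof -
    have "s0 \<in> insert 1 SL" unfolding s0_def using SLfin by (intro Min_in) auto
    then show ?thesis unfolding SL_def using slpos by auto
  qed
  have AGV: "k \<in> V \<and> l \<in> V \<and> k \<noteq> l" if "AG k l" for k l
    using neighbor_in[OF Gv] that unfolding AG_def by blast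
  have s0le: "s0 \<le> sl k l" if "AG k l" for k l
  proof -
    have "sl k l \<in> insert 1 SL" unfolding SL_def using AGV[OF that] by auto
    then show ?thesis unfolding s0_def using SLfin by simp
  qed
  have wbound: "real_of_int W \<ge> p a - p b + real L * s0" if "walk AG w a b W L" for a b W L
    using walk_lower[OF that, where p=p and s=s0] s0le unfolding sl_def by blast
  define Kf where "Kf = (\<lambda>a b W. nat (floor ((real_of_int W - (p a - p b)) / s0)))"
  have Lle: "L \<le> Kf a b W" if "walk AG w a b W L" for a b W L
  proof -
    have "real L * s0 \<le> real_of_int W - (p a - p b)" using wbound[OF that] by simp
    then have "real L \<le> (real_of_int W - (p a - p b)) / s0" using s0pos by (simp add: field_simps)
    then have "int L \<le> floor ((real_of_int W - (p a - p b)) / s0)" by (simp add: le_floor_iff)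
    then show ?thesis unfolding Kf_def by simp
  qed
  have Kmono: "Kf a b W1 \<le> Kf a b W2" if "W1 \<le> W2" for a b W1 W2
  proof -
    have "(real_of_int W1 - (p a - p b)) / s0 \<le> (real_of_int W2 - (p a - p b)) / s0"
      using that s0pos by (simp add: divide_right_mono)
    then show ?thesis unfolding Kf_def by (intro nat_mono floor_mono)
  qed
  have alt: "\<exists>W3 L3. walk AG w k l W3 L3 \<and> W3 \<le> w k l \<and> L3 \<ge> 2"
    if kl: "AG k l" "\<not> AH k l" for k l
  proof -
    have eG: "{k, l} \<in> G" and eH: "{k, l} \<notin> H" using kl unfolding AG_def AH_def by auto
    have "Qs V (G - {{k, l}}) p \<subseteq> Qs V G p" using red eG eH by blast
    then obtain W3 L3 where w3: "walk (\<lambda>x y. {x, y} \<in> G - {{k, l}}) w k l W3 L3" "W3 \<le> w k l"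
      using alt_walk[OF fin Gv p eG] unfolding w_def by blast
    have "L3 \<noteq> 0"
    proof
      assume "L3 = 0" then have "k = l" using w3(1) walk_L0 by metis
      then show False using AGV[OF kl(1)] by simp
    qed
    moreover have "L3 \<noteq> 1"
    proof
      assume "L3 = 1" then have "{k, l} \<in> G - {{k, l}}" using w3(1) walk_L1 by (metis One_nat_def)
      then show False by simp
    qed
    moreover have "walk AG w k l W3 L3" using w3(1) by (rule walk_mono) (simp add: AG_def)
    ultimately show ?thesis using w3(2) by (intro exI[of _ W3] exI[of _ L3]) simp
  qed
  have main: "\<forall>W L. walk AG w a b W L \<longrightarrow> Kf a b W - L = n \<longrightarrow> (\<exists>W' L'. walk AH w a b W' L' \<and> W' \<le> W)"
    for a b n
  proof (induction n rule: less_induct)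
    case (less n)
    show ?case
    proof (intro allI impI)
      fix W L assume wl: "walk AG w a b W L" and n: "Kf a b W - L = n"
      from walk_split[OF wl, of AH]
      show "\<exists>W' L'. walk AH w a b W' L' \<and> W' \<le> W"
      proof
        assume "walk AH w a b W L" then show ?thesis by blast
      next
        assume "\<exists>k l W1 L1 W2 L2. walk AH w a k W1 L1 \<and> AG k l \<and> \<not> AH k l \<and> walk AG w l b W2 L2
          \<and> W = W1 + w k l + W2 \<and> L = L1 + Suc L2"
        then obtain k l W1 L1 W2 L2 where h: "walk AH w a k W1 L1" "AG k l" "\<not> AH k l"
          "walk AG w l b W2 L2" "W = W1 + w k l + W2" "L = L1 + Suc L2" by blast
        obtain W3 L3 where a3: "walk AG w k l W3 L3" "W3 \<le> w k l" "L3 \<ge> 2" using alt[OF h(2,3)] by blast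
        have h1: "walk AG w a k W1 L1" using h(1) by (rule walk_mono) (simp add: AG_def AH_def, use HG in blast)
        have nw: "walk AG w a b (W1 + W3 + W2) (L1 + L3 + L2)"
          using walk_app[OF walk_app[OF h1 a3(1)] h(4)] .
        have Wle: "W1 + W3 + W2 \<le> W" using h(5) a3(2) by simp
        have Lgt: "L < L1 + L3 + L2" using h(6) a3(3) by simp
        have "L1 + L3 + L2 \<le> Kf a b (W1 + W3 + W2)" by (rule Lle[OF nw])
        moreover have "Kf a b (W1 + W3 + W2) \<le> Kf a b W" by (rule Kmono[OF Wle])
        ultimately have "Kf a b (W1 + W3 + W2) - (L1 + L3 + L2) < n" using n Lgt by linarith
        then obtain W' L' where "walk AH w a b W' L'" "W' \<le> W1 + W3 + W2"
          using less[rule_format, OF _ nw refl] by blast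
        then show ?thesis using Wle by (intro exI[of _ W'] exI[of _ L']) simp
      qed
    qed
  qed
  show ?thesis
  proof
    fix u assume u: "u \<in> Qs V H p"
    have uarc: "u x - u z < real_of_int (w x z)" if "AH x z" for x z
    proof -
      have "floor (u x - u z) = floor (p x - p z)" using u that unfolding Qs_def AH_def by blast
      then show ?thesis unfolding w_def using real_of_int_floor_add_one_gt[of "u x - u z"] by simp
    qed
    have ub: "u k - u l < real_of_int (w k l)" if kl: "{k, l} \<in> G" for k l
    proof -
      have "AG k l" using kl unfolding AG_def .
      then have "walk AG w k l (w k l) 1" by (rule walk_arc)
      then obtain W' L' where wh: "walk AH w k l W' L'" "W' \<le> w k l" using main by blast
      have "k \<noteq> l" using AGV \<open>AG k l\<close> by blast
      then have "u k - u l < real_of_int W'" using walk_ub[OF wh(1) uarc] by blast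
      then show ?thesis using wh(2) by linarith
    qed
    show "u \<in> Qs V G p" unfolding Qs_def
    proof (intro CollectI conjI allI impI)
      show "u \<in> RV V" using u by (simp add: Qs_def)
    next
      fix k l assume kl: "{k, l} \<in> G"
      have lk: "{l, k} \<in> G" using kl by (simp add: insert_commute)
      have pn: "p k - p l \<notin> \<int>" using p kl by (simp add: tor_complement_def)
      have "p l - p k = - (p k - p l)" by simp
      then have fl: "floor (p l - p k) = - floor (p k - p l) - 1" using floor_neg_nonint[OF pn] by simp
      have c2: "u k - u l < real_of_int (floor (p k - p l)) + 1" using ub[OF kl] unfolding w_def by simp
      have "u l - u k < real_of_int (floor (p l - p k)) + 1" using ub[OF lk] unfolding w_def by simp
      then have c1: "real_of_int (floor (p k - p l)) < u k - u l" using fl by simp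
      from floor_between[OF c1 c2]
      show "floor (u k - u l) = floor (p k - p l)" "u k - u l \<notin> \<int>" by auto
    qed
  qed
qed

lemma ZV_int: "z \<in> ZV V \<Longrightarrow> z u \<in> \<int>"
  by (simp add: ZV_def)

lemma ZV_out: "z \<in> ZV V \<Longrightarrow> u \<notin> V \<Longrightarrow> z u = 0"
  by (simp add: ZV_def)

lemma shift_compl:
  assumes x: "x \<in> tor_complement V H" and z: "z \<in> ZV V"
  shows "shiftz z x \<in> tor_complement V H"
  unfolding tor_complement_def
proof (intro CollectI conjI allI impI)
  show "shiftz z x \<in> RV V" using x z by (simp add: tor_complement_def RV_def ZV_def shiftz_def)
next
  fix k l assume kl: "{k, l} \<in> H"
  have xn: "x k - x l \<notin> \<int>" using x kl by (simp add: tor_complement_def)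
  have zi: "z k - z l \<in> \<int>" using ZV_int[OF z] by (simp add: Ints_diff)
  show "shiftz z x k - shiftz z x l \<notin> \<int>"
  proof
    assume "shiftz z x k - shiftz z x l \<in> \<int>"
    then have "(x k - x l) + (z k - z l) \<in> \<int>" by (simp add: shiftz_def algebra_simps)
    then have "(x k - x l) + (z k - z l) - (z k - z l) \<in> \<int>" using zi by (rule Ints_diff)
    then show False using xn by simp
  qed
qed

lemma shift_orient:
  assumes z: "z \<in> ZV V"
  shows "orient_of E (shiftz z x) = orient_of E x"
proof -
  have "\<And>u. frac (shiftz z x u) = frac (x u)" unfolding shiftz_def using ZV_int[OF z] frac_add_int_right by blast
  then show ?thesis unfolding orient_of_def by simp
qed

lemma QsD: "y \<in> Qs V H p \<Longrightarrow> {k, l} \<in> H \<Longrightarrow> floor (y k - y l) = floor (p k - p l) \<and> y k - y l \<notin> \<int>"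
  unfolding Qs_def by blast

lemma int_floor_eq: "x \<in> \<int> \<Longrightarrow> of_int (floor x) = (x::real)"
  by (erule Ints_cases) simp

lemma ZV_of_int: "z \<in> ZV V \<Longrightarrow> z = (\<lambda>u. of_int (floor (z u)))"
  by (rule ext) (simp add: ZV_int)

lemma seg_floor:
  fixes a b :: real
  assumes h: "\<forall>t\<in>{0..1}. (1 - t) * a + t * b \<notin> \<int>"
  shows "floor a = floor b"
proof (rule ccontr)
  assume ne: "floor a \<noteq> floor b"
  then have ab: "a \<noteq> b" by auto
  obtain m :: int where m: "min a b \<le> of_int m" "of_int m \<le> max a b" using floor_ne_int_between[OF ne] by blast
  define t where "t = (of_int m - a) / (b - a)"
  have t01: "t \<in> {0..1}"
  proof (cases "a < b")
    case True
    then have "a \<le> of_int m" "of_int m \<le> b" using m by auto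
    then show ?thesis unfolding t_def using True by (auto simp: field_simps)
  next
    case False
    then have ba: "b < a" using ab by simp
    then have h1: "b \<le> of_int m" "of_int m \<le> a" using m by auto
    have te: "t = (a - of_int m) / (a - b)" unfolding t_def by (metis minus_diff_eq minus_divide_divide)
    have "0 \<le> (a - of_int m) / (a - b)" using h1 ba by simp
    moreover have "(a - of_int m) / (a - b) \<le> 1" using h1 ba by (simp add: divide_le_eq_1)
    ultimately show ?thesis unfolding te by simp
  qed
  have "(1 - t) * a + t * b = a + t * (b - a)" by (simp add: algebra_simps)
  also have "\<dots> = of_int m" unfolding t_def using ab by simp
  finally have "(1 - t) * a + t * b \<in> \<int>" by simp
  then show False using h t01 by blast
qed

lemma Qs_via_seg:
  assumes u: "u \<in> RV V" and p: "p \<in> tor_complement V G"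
    and seg: "\<forall>t\<in>{0..1}. (\<lambda>v. (1 - t) * p v + t * u v) \<in> tor_complement V G"
  shows "u \<in> Qs V G p"
  unfolding Qs_def
proof (intro CollectI conjI allI impI)
  show "u \<in> RV V" by (rule u)
next
  fix k l assume kl: "{k, l} \<in> G"
  have h: "\<forall>t\<in>{0..1}. (1 - t) * (p k - p l) + t * (u k - u l) \<notin> \<int>"
  proof
    fix t :: real assume "t \<in> {0..1}"
    then have "(\<lambda>v. (1 - t) * p v + t * u v) \<in> tor_complement V G" using seg by blast
    then have "((1 - t) * p k + t * u k) - ((1 - t) * p l + t * u l) \<notin> \<int>" using kl by (simp add: tor_complement_def)
    moreover have "((1 - t) * p k + t * u k) - ((1 - t) * p l + t * u l) = (1 - t) * (p k - p l) + t * (u k - u l)"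
      by (simp add: algebra_simps)
    ultimately show "(1 - t) * (p k - p l) + t * (u k - u l) \<notin> \<int>" by simp
  qed
  show "floor (u k - u l) = floor (p k - p l)" using seg_floor[OF h] by simp
  have "(1::real) \<in> {0..1}" by simp
  then have "(1 - 1) * (p k - p l) + 1 * (u k - u l) \<notin> \<int>" using h by blast
  then show "u k - u l \<notin> \<int>" by simp
qed

lemma Qs_mono: "G \<subseteq> H \<Longrightarrow> Qs V H p \<subseteq> Qs V G p"
  unfolding Qs_def by blast

lemma compl_mono: "G \<subseteq> H \<Longrightarrow> tor_complement V H \<subseteq> tor_complement V G"
  unfolding tor_complement_def by blast

lemma zero_ZV: "(\<lambda>u. 0) \<in> ZV V" by (simp add: ZV_def)

lemma Qs_sub_Ts: "Qs V H q \<subseteq> Ts V H q"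
proof
  fix y assume "y \<in> Qs V H q"
  moreover have "y = shiftz (\<lambda>u. 0) y" unfolding shiftz_def by simp
  ultimately show "y \<in> Ts V H q" unfolding Ts_def using zero_ZV by blast
qed

lemma Ts_sub_compl: "Ts V H q \<subseteq> tor_complement V H"
  unfolding Ts_def using shift_compl Qs_sub_compl by blast

locale TP =
  fixes V :: "'a set" and E :: "'a set set" and \<omega> :: "('a \<times> 'a) set"
  assumes sg: "simple_graph V E" and ac: "\<omega> \<in> Acyc V E"
begin

lemma finV: "finite V" and Ev: "E \<subseteq> vpairs V" using sg by (auto simp: simple_graph_def)
lemma oriw: "is_orientation V E \<omega>" and acy: "acyclic \<omega>" using ac by (auto simp: Acyc_def)

abbreviation "TC \<equiv> torTC_edges V E \<omega>"
abbreviation "Ch \<equiv> tor_chamber V E \<omega>"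

lemma Ch_iff: "x \<in> Ch \<longleftrightarrow> x \<in> tor_complement V E \<and> (Rr V)\<^sup>*\<^sup>* \<omega> (orient_of E x)"
  by (simp add: tor_chamber_def tor_class_iff)

lemma TC_vpairs: "TC \<subseteq> vpairs V"
proof
  fix e assume "e \<in> TC"
  then have "e \<in> E \<or> (\<exists>i j. e = {i, j} \<and> i \<in> V \<and> j \<in> V \<and> i \<noteq> j)" unfolding torTC_edges_def by blast
  then show "e \<in> vpairs V"
  proof
    assume "e \<in> E" then show ?thesis using Ev by (rule rev_subsetD)
  next
    assume "\<exists>i j. e = {i, j} \<and> i \<in> V \<and> j \<in> V \<and> i \<noteq> j"
    then obtain i j where "e = {i, j}" "i \<in> V" "j \<in> V" "i \<noteq> j" by blast
    then show ?thesis unfolding vpairs_def by blast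
  qed
qed

lemma E_TC: "E \<subseteq> TC" unfolding torTC_edges_def by blast

lemma Ch_sub_TC: "x \<in> Ch \<Longrightarrow> x \<in> tor_complement V TC"
proof -
  assume x: "x \<in> Ch"
  then have xC: "x \<in> tor_complement V E" by (simp add: Ch_iff)
  show ?thesis unfolding tor_complement_def
  proof (intro CollectI conjI allI impI)
    show "x \<in> RV V" using xC by (simp add: tor_complement_def)
  next
    fix k l assume kl: "{k, l} \<in> TC"
    show "x k - x l \<notin> \<int>"
    proof (cases "{k, l} \<in> E")
      case True then show ?thesis using xC by (simp add: tor_complement_def)
    next
      case False
      then obtain i j where ij: "{k, l} = {i, j}" "\<forall>y\<in>Ch. y i - y j \<notin> \<int>"
        using kl unfolding torTC_edges_def by blast
      have xij: "x i - x j \<notin> \<int>" using ij(2) x by blast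
      from ij(1) have "(k = i \<and> l = j) \<or> (k = j \<and> l = i)" by (auto simp: doubleton_eq_iff)
      then show ?thesis
      proof
        assume "k = i \<and> l = j" then show ?thesis using xij by simp
      next
        assume h: "k = j \<and> l = i"
        show ?thesis
        proof
          assume "x k - x l \<in> \<int>"
          then have "- (x k - x l) \<in> \<int>" by (rule Ints_minus)
          then show False using xij h by simp
        qed
      qed
    qed
  qed
qed

lemma Ch_eq_T:
  assumes p: "p \<in> Ch"
  shows "Ch = Ts V E p"
proof
  have pC: "p \<in> tor_complement V E" and pR: "(Rr V)\<^sup>*\<^sup>* \<omega> (orient_of E p)" using p by (auto simp: Ch_iff)
  show "Ch \<subseteq> Ts V E p"
  proof
    fix x assume x: "x \<in> Ch"
    have xC: "x \<in> tor_complement V E" and xR: "(Rr V)\<^sup>*\<^sup>* \<omega> (orient_of E x)" using x by (auto simp: Ch_iff)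
    have "(Rr V)\<^sup>*\<^sup>* (orient_of E p) (orient_of E x)"
      using rtranclp_trans[OF Rrs_sym[OF pR] xR] .
    then have "cEq V E x p" using class_cEq[OF finV Ev _ pC refl xC refl] by blast
    then obtain zi :: "'a \<Rightarrow> int" where zi: "\<forall>u. u \<notin> V \<longrightarrow> zi u = 0"
      "\<forall>k l. {k, l} \<in> E \<longrightarrow> floor (x k - x l) = floor (p k - p l) + zi k - zi l"
      unfolding cEq_def by blast
    define z where "z = (\<lambda>u. real_of_int (zi u))"
    define y where "y = (\<lambda>u. x u - z u)"
    have zZ: "z \<in> ZV V" unfolding ZV_def z_def using zi(1) by simp
    have xs: "x = shiftz z y" unfolding shiftz_def y_def by simp
    have yQ: "y \<in> Qs V E p" unfolding Qs_def
    proof (intro CollectI conjI allI impI)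
      show "y \<in> RV V" using xC zi(1) unfolding y_def z_def tor_complement_def RV_def by simp
    next
      fix k l assume kl: "{k, l} \<in> E"
      have e: "y k - y l = (x k - x l) - real_of_int (zi k - zi l)" unfolding y_def z_def by simp
      have xn: "x k - x l \<notin> \<int>" using xC kl by (simp add: tor_complement_def)
      have "floor ((x k - x l) - real_of_int (zi k - zi l)) = floor (x k - x l) - (zi k - zi l)"
        by (rule floor_diff_of_int)
      then show "floor (y k - y l) = floor (p k - p l)" unfolding e using zi(2) kl by simp
      show "y k - y l \<notin> \<int>"
      proof
        assume "y k - y l \<in> \<int>"
        then have "(y k - y l) + real_of_int (zi k - zi l) \<in> \<int>" by (intro Ints_add) auto
        then show False using xn unfolding e by simp
      qed
    qed
    show "x \<in> Ts V E p" unfolding Ts_def using zZ yQ xs by blast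
  qed
  show "Ts V E p \<subseteq> Ch"
  proof
    fix x assume "x \<in> Ts V E p"
    then obtain z y where zZ: "z \<in> ZV V" and yQ: "y \<in> Qs V E p" and xs: "x = shiftz z y"
      unfolding Ts_def by blast
    have yC: "y \<in> tor_complement V E" using yQ Qs_sub_compl by blast
    have sy: "sameE E y p" using yQ unfolding Qs_def sameE_def by blast
    have "(Rr V)\<^sup>*\<^sup>* (orient_of E p) (orient_of E y)" by (rule pretzel[OF finV Ev pC yC sy])
    then have "(Rr V)\<^sup>*\<^sup>* \<omega> (orient_of E x)" using pR shift_orient[OF zZ] xs by (metis rtranclp_trans)
    moreover have "x \<in> tor_complement V E" using shift_compl[OF yC zZ] xs by simp
    ultimately show "x \<in> Ch" by (simp add: Ch_iff)
  qed
qed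

lemma seg_Qs_TC:
  assumes p: "p \<in> tor_complement V H" and sub: "Qs V H p \<subseteq> Ch"
  shows "Qs V H p \<subseteq> Qs V TC p"
proof
  fix u assume u: "u \<in> Qs V H p"
  have pQ: "p \<in> Qs V H p" using p by (rule p_in_Qs)
  have pTC: "p \<in> tor_complement V TC" using Ch_sub_TC sub pQ by blast
  show "u \<in> Qs V TC p"
  proof (rule Qs_via_seg[OF _ pTC])
    show "u \<in> RV V" using u by (simp add: Qs_def)
    show "\<forall>t\<in>{0..1}. (\<lambda>v. (1 - t) * p v + t * u v) \<in> tor_complement V TC"
    proof
      fix t :: real assume "t \<in> {0..1}"
      then have "(\<lambda>v. (1 - t) * p v + t * u v) \<in> Qs V H p" using seg_in_Qs[OF pQ u] by auto
      then have "(\<lambda>v. (1 - t) * p v + t * u v) \<in> Ch" using sub by blast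
      then show "(\<lambda>v. (1 - t) * p v + t * u v) \<in> tor_complement V TC" by (rule Ch_sub_TC)
    qed
  qed
qed

lemma K:
  assumes Hv: "H \<subseteq> vpairs V" and p: "p \<in> Ch"
  shows "Ch \<in> tor_chambers V H \<longleftrightarrow> H \<subseteq> TC \<and> Qs V H p \<subseteq> Qs V TC p"
proof
  assume "Ch \<in> tor_chambers V H"
  then obtain q where q: "q \<in> tor_complement V H" and Chq: "Ch = Ts V H q"
    unfolding tor_chambers_eq by blast
  have ChH: "Ch \<subseteq> tor_complement V H" using Chq Ts_sub_compl by blast
  have HTC: "H \<subseteq> TC"
  proof
    fix e assume eH: "e \<in> H"
    then have "e \<in> vpairs V" using Hv by blast
    then have "\<exists>i j. i \<in> V \<and> j \<in> V \<and> i \<noteq> j \<and> e = {i, j}" unfolding vpairs_def by (rule CollectD)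
    then obtain i j where ij: "e = {i, j}" "i \<in> V" "j \<in> V" "i \<noteq> j" by blast
    have "\<forall>x\<in>Ch. x i - x j \<notin> \<int>"
    proof
      fix x assume "x \<in> Ch"
      then have "x \<in> tor_complement V H" using ChH by blast
      moreover have "{i, j} \<in> H" using eH ij(1) by simp
      ultimately show "x i - x j \<notin> \<int>" by (simp add: tor_complement_def)
    qed
    then have "e \<in> {{i, j} | i j. i \<in> V \<and> j \<in> V \<and> i \<noteq> j \<and> (\<forall>x\<in>Ch. x i - x j \<notin> \<int>)}"
      using ij by blast
    then show "e \<in> TC" unfolding torTC_edges_def by (rule UnI2)
  qed
  have pT: "p \<in> Ts V H q" using p Chq by simp
  then obtain z y where zZ: "z \<in> ZV V" and yQ: "y \<in> Qs V H q" and ps: "p = shiftz z y"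
    unfolding Ts_def by blast
  have pH: "p \<in> tor_complement V H" using p ChH by blast
  have sub: "Qs V H p \<subseteq> Ch"
  proof
    fix u assume u: "u \<in> Qs V H p"
    define u' where "u' = (\<lambda>v. u v - z v)"
    have u'Q: "u' \<in> Qs V H q" unfolding Qs_def
    proof (intro CollectI conjI allI impI)
      have "u \<in> RV V" using u by (simp add: Qs_def)
      then show "u' \<in> RV V" using ZV_out[OF zZ] unfolding u'_def RV_def by simp
    next
      fix k l assume kl: "{k, l} \<in> H"
      define c where "c = floor (z k) - floor (z l)"
      have "z k = of_int (floor (z k))" "z l = of_int (floor (z l))"
        using int_floor_eq[OF ZV_int[OF zZ]] by metis+
      then have zc: "z k - z l = real_of_int c" unfolding c_def by (metis of_int_diff)
      have "u' k - u' l = (u k - u l) - (z k - z l)" unfolding u'_def by simp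
      then have e1: "u' k - u' l = (u k - u l) - real_of_int c" by (simp only: zc)
      have "p k - p l = (y k - y l) + (z k - z l)" using ps unfolding shiftz_def by simp
      then have e2: "p k - p l = (y k - y l) + real_of_int c" by (simp only: zc)
      have fu: "floor (u k - u l) = floor (p k - p l)" using QsD[OF u kl] by blast
      have fy: "floor (y k - y l) = floor (q k - q l)" using QsD[OF yQ kl] by blast
      have un: "u k - u l \<notin> \<int>" using QsD[OF u kl] by blast
      have "floor (u' k - u' l) = floor (u k - u l) - c" unfolding e1 by (rule floor_diff_of_int)
      also have "\<dots> = floor (p k - p l) - c" using fu by simp
      also have "floor (p k - p l) = floor (y k - y l) + c" unfolding e2 by (rule floor_add_int[symmetric])
      finally show "floor (u' k - u' l) = floor (q k - q l)" using fy by simp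
      show "u' k - u' l \<notin> \<int>"
      proof
        assume "u' k - u' l \<in> \<int>"
        then have "(u' k - u' l) + real_of_int c \<in> \<int>" by (intro Ints_add) auto
        then show False using un unfolding e1 by simp
      qed
    qed
    have "u = shiftz z u'" unfolding shiftz_def u'_def by simp
    then have "u \<in> shiftz z ` Qs V H q" using u'Q by (rule image_eqI)
    then have "u \<in> Ts V H q" unfolding Ts_def using zZ by (rule UN_I[rotated])
    then show "u \<in> Ch" using Chq by simp
  qed
  show "H \<subseteq> TC \<and> Qs V H p \<subseteq> Qs V TC p" using HTC seg_Qs_TC[OF pH sub] by blast
next
  assume h: "H \<subseteq> TC \<and> Qs V H p \<subseteq> Qs V TC p"
  have pTC: "p \<in> tor_complement V TC" using Ch_sub_TC p by blast
  have pH: "p \<in> tor_complement V H" using compl_mono[of H TC V] h pTC by blast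
  have pE: "p \<in> tor_complement V E" using p by (simp add: Ch_iff)
  have QE: "Qs V E p \<subseteq> Ch" using Ch_eq_T[OF p] Qs_sub_Ts by blast
  have "Qs V E p \<subseteq> Qs V TC p" by (rule seg_Qs_TC[OF pE QE])
  moreover have "Qs V TC p \<subseteq> Qs V H p" using Qs_mono h by blast
  moreover have "Qs V TC p \<subseteq> Qs V E p" using Qs_mono[OF E_TC] .
  ultimately have "Qs V E p = Qs V H p" using h by blast
  then have "Ch = Ts V H p" using Ch_eq_T[OF p] unfolding Ts_def by simp
  then show "Ch \<in> tor_chambers V H" unfolding tor_chambers_eq using pH by blast
qed

definition Fs :: "('a \<Rightarrow> real) \<Rightarrow> 'a set set" where
  "Fs p = {e \<in> TC. \<not> Qs V (TC - {e}) p \<subseteq> Qs V TC p}"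

lemma Fprop:
  assumes p: "p \<in> Ch"
  shows "Fs p \<subseteq> vpairs V \<and> (\<forall>H. H \<subseteq> vpairs V \<longrightarrow> (Ch \<in> tor_chambers V H \<longleftrightarrow> Fs p \<subseteq> H \<and> H \<subseteq> TC))"
proof (intro conjI allI impI)
  show "Fs p \<subseteq> vpairs V" using TC_vpairs unfolding Fs_def by blast
next
  fix H assume Hv: "H \<subseteq> vpairs V"
  have pTC: "p \<in> tor_complement V TC" using Ch_sub_TC p by blast
  have eq: "Qs V H p \<subseteq> Qs V TC p \<longleftrightarrow> Fs p \<subseteq> H" if HT: "H \<subseteq> TC"
  proof
    assume sub: "Qs V H p \<subseteq> Qs V TC p"
    show "Fs p \<subseteq> H"
    proof
      fix e assume eF: "e \<in> Fs p"
      show "e \<in> H"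
      proof (rule ccontr)
        assume "e \<notin> H"
        then have "H \<subseteq> TC - {e}" using HT by blast
        then have "Qs V (TC - {e}) p \<subseteq> Qs V H p" by (rule Qs_mono)
        then show False using sub eF unfolding Fs_def by blast
      qed
    qed
  next
    assume FH: "Fs p \<subseteq> H"
    have red: "\<forall>e\<in>TC - H. Qs V (TC - {e}) p \<subseteq> Qs V TC p" using FH unfolding Fs_def by blast
    show "Qs V H p \<subseteq> Qs V TC p" by (rule redundant_all[OF finV TC_vpairs pTC HT red])
  qed
  show "Ch \<in> tor_chambers V H \<longleftrightarrow> Fs p \<subseteq> H \<and> H \<subseteq> TC"
    using K[OF Hv p] eq by blast
qed

lemma torHasse_eq:
  assumes p: "p \<in> Ch"
  shows "torHasse_edges V E \<omega> = Fs p"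
  unfolding torHasse_edges_def
proof (rule the_equality)
  show "Fs p \<subseteq> vpairs V \<and> (\<forall>H. H \<subseteq> vpairs V \<longrightarrow> (Ch \<in> tor_chambers V H \<longleftrightarrow> Fs p \<subseteq> H \<and> H \<subseteq> TC))"
    by (rule Fprop[OF p])
next
  fix F assume F: "F \<subseteq> vpairs V \<and> (\<forall>H. H \<subseteq> vpairs V \<longrightarrow> (Ch \<in> tor_chambers V H \<longleftrightarrow> F \<subseteq> H \<and> H \<subseteq> TC))"
  have Fv: "F \<subseteq> vpairs V" using F by (rule conjunct1)
  have Fc: "\<And>H. H \<subseteq> vpairs V \<Longrightarrow> (Ch \<in> tor_chambers V H \<longleftrightarrow> F \<subseteq> H \<and> H \<subseteq> TC)"
    using F by (intro conjunct2[OF F, rule_format])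
  have FPv: "Fs p \<subseteq> vpairs V" using Fprop[OF p] by (rule conjunct1)
  have FPc: "\<And>H. H \<subseteq> vpairs V \<Longrightarrow> (Ch \<in> tor_chambers V H \<longleftrightarrow> Fs p \<subseteq> H \<and> H \<subseteq> TC)"
    using Fprop[OF p] by (intro conjunct2[OF Fprop[OF p], rule_format])
  have FsTC: "Fs p \<subseteq> TC" unfolding Fs_def by blast
  have "Ch \<in> tor_chambers V TC" using FPc[OF TC_vpairs] FsTC by simp
  then have FTC: "F \<subseteq> TC" using Fc[OF TC_vpairs] by simp
  have "Ch \<in> tor_chambers V F" using Fc[OF Fv] FTC by simp
  then have "Fs p \<subseteq> F" using FPc[OF Fv] by simp
  moreover have "Ch \<in> tor_chambers V (Fs p)" using FPc[OF FPv] FsTC by simp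
  then have "F \<subseteq> Fs p" using Fc[OF FPv] by simp
  ultimately show "F = Fs p" by blast
qed

end

lemma orient_from_values:
  assumes ori: "is_orientation V E w" and Ev: "E \<subseteq> vpairs V" and xRV: "x \<in> RV V"
    and rng: "\<And>v. v \<in> V \<Longrightarrow> 0 \<le> x v \<and> x v < 1"
    and mono: "\<And>k l. (k, l) \<in> w \<Longrightarrow> x k < x l"
  shows "x \<in> tor_complement V E \<and> orient_of E x = w"
proof -
  have o1: "\<And>i j. (i, j) \<in> w \<Longrightarrow> {i, j} \<in> E \<and> (j, i) \<notin> w"
    and o2: "\<And>i j. {i, j} \<in> E \<Longrightarrow> i \<noteq> j \<Longrightarrow> (i, j) \<in> w \<or> (j, i) \<in> w"
    using ori unfolding is_orientation_def by blast+
  have fr: "\<And>v. v \<in> V \<Longrightarrow> frac (x v) = x v" using rng by (simp add: frac_eq)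
  have ne: "x k - x l \<notin> \<int>" if kl: "{k, l} \<in> E" for k l
  proof
    assume h: "x k - x l \<in> \<int>"
    have kV: "k \<in> V" "l \<in> V" "k \<noteq> l" using neighbor_in[OF Ev kl] by auto
    have "x k \<noteq> x l" using o2[OF kl kV(3)] mono by force
    moreover have "x k - x l < 1" "x l - x k < 1" using rng[OF kV(1)] rng[OF kV(2)] by linarith+
    moreover obtain m :: int where m: "x k - x l = of_int m" using h by (auto elim: Ints_cases)
    ultimately have "of_int m < (1::real)" "- 1 < (of_int m :: real)" by linarith+
    then have "m = 0" by linarith
    then show False using m \<open>x k \<noteq> x l\<close> by simp
  qed
  have C: "x \<in> tor_complement V E" unfolding tor_complement_def using xRV ne by blast
  have "orient_of E x = w"
  proof (intro set_eqI)
    fix e :: "'a \<times> 'a"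
    obtain a b where ab: "e = (a, b)" by (cases e)
    have "(a, b) \<in> orient_of E x \<longleftrightarrow> (a, b) \<in> w"
    proof
      assume "(a, b) \<in> orient_of E x"
      then have E1: "{a, b} \<in> E" and lt: "frac (x a) < frac (x b)" by (auto simp: orient_iff)
      have V1: "a \<in> V" "b \<in> V" "a \<noteq> b" using neighbor_in[OF Ev E1] by auto
      have "x a < x b" using lt fr V1 by simp
      then show "(a, b) \<in> w" using o2[OF E1 V1(3)] mono by force
    next
      assume h: "(a, b) \<in> w"
      then have E1: "{a, b} \<in> E" using o1 by blast
      have V1: "a \<in> V" "b \<in> V" using neighbor_in[OF Ev E1] by auto
      have "frac (x a) < frac (x b)" using mono[OF h] fr V1 by simp
      then show "(a, b) \<in> orient_of E x" using E1 by (simp add: orient_iff)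
    qed
    then show "e \<in> orient_of E x \<longleftrightarrow> e \<in> w" using ab by simp
  qed
  then show ?thesis using C by blast
qed

lemma orient_trancl:
  "(a, b) \<in> (orient_of E x)\<^sup>+ \<Longrightarrow> frac (x a) < frac (x b)"
  by (induction rule: trancl_induct) (auto simp: orient_iff)

lemma orient_acyclic: "acyclic (orient_of E x)"
  unfolding acyclic_def
proof (intro allI notI)
  fix a assume "(a, a) \<in> (orient_of E x)\<^sup>+"
  then have "frac (x a) < frac (x a)" by (rule orient_trancl)
  then show False by simp
qed

lemma orient_is_orientation:
  assumes x: "x \<in> tor_complement V E"
  shows "is_orientation V E (orient_of E x)"
proof -
  have a: "\<forall>i j. (i, j) \<in> orient_of E x \<longrightarrow> {i, j} \<in> E \<and> (j, i) \<notin> orient_of E x"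
    by (auto simp: orient_iff)
  have b: "(i, j) \<in> orient_of E x \<or> (j, i) \<in> orient_of E x" if h: "{i, j} \<in> E" "i \<noteq> j" for i j
  proof -
    have "frac (x i) \<noteq> frac (x j)" using complD[OF x h(1)] .
    then have "frac (x i) < frac (x j) \<or> frac (x j) < frac (x i)" by linarith
    then show ?thesis using h by (auto simp: orient_iff insert_commute)
  qed
  show ?thesis unfolding is_orientation_def using a b by blast
qed

lemma rank_point:
  assumes fin: "finite V" and ori: "is_orientation V E w" and Ev: "E \<subseteq> vpairs V"
    and sub: "w \<subseteq> \<rho>" and nb: "\<And>k l. (k, l) \<in> w \<Longrightarrow> (l, k) \<notin> \<rho>\<^sup>*"
  defines "x \<equiv> (\<lambda>v. if v \<in> V then real (card {u \<in> V. (u, v) \<in> \<rho>\<^sup>*}) / real (card V + 1) else 0)"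
  shows "x \<in> tor_complement V E \<and> orient_of E x = w"
proof (rule orient_from_values[OF ori Ev])
  show "x \<in> RV V" unfolding x_def RV_def by simp
next
  fix v assume "v \<in> V"
  have "card {u \<in> V. (u, v) \<in> \<rho>\<^sup>*} \<le> card V" using fin by (intro card_mono) auto
  then have "real (card {u \<in> V. (u, v) \<in> \<rho>\<^sup>*}) < real (card V + 1)" by simp
  then show "0 \<le> x v \<and> x v < 1" unfolding x_def using \<open>v \<in> V\<close> by (simp add: field_simps)
next
  fix k l assume kl: "(k, l) \<in> w"
  have E1: "{k, l} \<in> E" using ori kl unfolding is_orientation_def by blast
  have V1: "k \<in> V" "l \<in> V" using neighbor_in[OF Ev E1] by auto
  let ?A = "\<lambda>v. {u \<in> V. (u, v) \<in> \<rho>\<^sup>*}"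
  have "?A k \<subseteq> ?A l" using sub kl by (auto intro: rtrancl_into_rtrancl)
  moreover have "l \<in> ?A l" using V1 by simp
  moreover have "l \<notin> ?A k" using nb[OF kl] by simp
  ultimately have "?A k \<subset> ?A l" by blast
  then have "card (?A k) < card (?A l)" using fin by (intro psubset_card_mono) auto
  then show "x k < x l" unfolding x_def using V1 by (simp add: divide_strict_right_mono)
qed

lemma rho_decomp:
  assumes "(a, b) \<in> (w \<union> {(i, j), (j, i)})\<^sup>*"
  shows "(a, b) \<in> w\<^sup>* \<or> (((a, i) \<in> w\<^sup>* \<or> (a, j) \<in> w\<^sup>*) \<and> ((i, b) \<in> w\<^sup>* \<or> (j, b) \<in> w\<^sup>*))"
  using assms
proof (induction rule: rtrancl_induct)
  case base then show ?case by simp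
next
  case (step c b)
  consider "(c, b) \<in> w" | "c = i" "b = j" | "c = j" "b = i" using step(2) by blast
  then show ?case
  proof cases
    case 1
    then show ?thesis using step(3) by (meson rtrancl.rtrancl_into_rtrancl)
  next
    case 2
    then show ?thesis using step(3) by blast
  next
    case 3
    then show ?thesis using step(3) by blast
  qed
qed

context TP
begin

lemma w_sub: "\<omega> \<subseteq> V \<times> V"
proof
  fix e assume "e \<in> \<omega>"
  moreover obtain a b where "e = (a, b)" by (cases e)
  ultimately have "{a, b} \<in> E" using oriw unfolding is_orientation_def by blast
  then show "e \<in> V \<times> V" using neighbor_in[OF Ev] \<open>e = (a, b)\<close> by blast
qed

lemma p0_exists: "\<exists>p. p \<in> Ch"
proof -
  have nb: "(l, k) \<notin> \<omega>\<^sup>*" if "(k, l) \<in> \<omega>" for k l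
  proof
    assume "(l, k) \<in> \<omega>\<^sup>*"
    then have "(k, k) \<in> \<omega>\<^sup>+" using that by (meson rtrancl_into_trancl2)
    then show False using acy unfolding acyclic_def by blast
  qed
  obtain x where "x \<in> tor_complement V E" "orient_of E x = \<omega>"
    using rank_point[OF finV oriw Ev subset_refl nb] by blast
  then have "x \<in> Ch" by (simp add: Ch_iff)
  then show ?thesis by blast
qed


lemma class_realize:
  assumes p0: "p0 \<in> Ch" and R: "(Rr V)\<^sup>*\<^sup>* \<omega> w'"
  shows "\<exists>x. x \<in> tor_complement V E \<and> orient_of E x = w'"
proof -
  have p0C: "p0 \<in> tor_complement V E" and p0R: "(Rr V)\<^sup>*\<^sup>* \<omega> (orient_of E p0)" using p0 by (auto simp: Ch_iff)
  have "(Rr V)\<^sup>*\<^sup>* (orient_of E p0) w'" using rtranclp_trans[OF Rrs_sym[OF p0R] R] .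
  then show ?thesis using realize[OF finV Ev _ p0C refl] by blast
qed

lemma part3: "TC = (\<Inter>w'\<in>tor_class V \<omega>. tc_edges w')"
proof
  obtain p0 where p0: "p0 \<in> Ch" using p0_exists by blast
  show "TC \<subseteq> (\<Inter>w'\<in>tor_class V \<omega>. tc_edges w')"
  proof (intro subsetI INT_I)
    fix e w' assume eT: "e \<in> TC" and wc: "w' \<in> tor_class V \<omega>"
    have R: "(Rr V)\<^sup>*\<^sup>* \<omega> w'" using wc by (simp add: tor_class_iff)
    obtain x where xC: "x \<in> tor_complement V E" and xo: "orient_of E x = w'"
      using class_realize[OF p0 R] by blast
    have ori': "is_orientation V E w'" using orient_is_orientation[OF xC] xo by simp
    have acy': "acyclic w'" using orient_acyclic[of E x] xo by simp
    have "e \<in> vpairs V" using eT TC_vpairs by blast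
    then have "\<exists>i j. i \<in> V \<and> j \<in> V \<and> i \<noteq> j \<and> e = {i, j}" unfolding vpairs_def by (rule CollectD)
    then obtain i j where ij: "e = {i, j}" "i \<in> V" "j \<in> V" "i \<noteq> j" by blast
    show "e \<in> tc_edges w'"
    proof (cases "(i, j) \<in> w'\<^sup>+ \<or> (j, i) \<in> w'\<^sup>+")
      case True
      then show ?thesis unfolding tc_edges_def using ij(1) by (auto simp: insert_commute)
    next
      case False
      have nE: "e \<notin> E"
      proof
        assume "e \<in> E"
        then have "(i, j) \<in> w' \<or> (j, i) \<in> w'" using ori' ij unfolding is_orientation_def by blast
        then show False using False by blast
      qed
      then have allx: "\<forall>y\<in>Ch. y i - y j \<notin> \<int>"
      proof -
        obtain a b where ab: "e = {a, b}" "\<forall>y\<in>Ch. y a - y b \<notin> \<int>"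
          using eT nE unfolding torTC_edges_def by blast
        have "(a = i \<and> b = j) \<or> (a = j \<and> b = i)" using ab(1) ij(1) by (auto simp: doubleton_eq_iff)
        then show ?thesis
        proof
          assume "a = i \<and> b = j" then show ?thesis using ab(2) by simp
        next
          assume h: "a = j \<and> b = i"
          show ?thesis
          proof
            fix y assume "y \<in> Ch"
            then have n: "y j - y i \<notin> \<int>" using ab(2) h by simp
            show "y i - y j \<notin> \<int>"
            proof
              assume "y i - y j \<in> \<int>"
              then have "- (y i - y j) \<in> \<int>" by (rule Ints_minus)
              then show False using n by simp
            qed
          qed
        qed
      qed
      define \<rho> where "\<rho> = w' \<union> {(i, j), (j, i)}"
      have nb: "(l, k) \<notin> \<rho>\<^sup>*" if kl: "(k, l) \<in> w'" for k l
      proof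
        assume "(l, k) \<in> \<rho>\<^sup>*"
        then have d: "(l, k) \<in> w'\<^sup>* \<or> (((l, i) \<in> w'\<^sup>* \<or> (l, j) \<in> w'\<^sup>*) \<and> ((i, k) \<in> w'\<^sup>* \<or> (j, k) \<in> w'\<^sup>*))"
          unfolding \<rho>_def by (rule rho_decomp)
        have cyc: "\<And>s t. (s, k) \<in> w'\<^sup>* \<Longrightarrow> (l, t) \<in> w'\<^sup>* \<Longrightarrow> (s, t) \<in> w'\<^sup>+"
        proof -
          fix s t assume "(s, k) \<in> w'\<^sup>*" "(l, t) \<in> w'\<^sup>*"
          then have "(s, l) \<in> w'\<^sup>+" using kl by (meson rtrancl_into_trancl1)
          then show "(s, t) \<in> w'\<^sup>+" using \<open>(l, t) \<in> w'\<^sup>*\<close> by (meson trancl_rtrancl_trancl)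
        qed
        have noc: "\<And>s. (s, s) \<notin> w'\<^sup>+" using acy' unfolding acyclic_def by blast
        from d show False
        proof
          assume "(l, k) \<in> w'\<^sup>*"
          then show False using cyc[of k k] noc by blast
        next
          assume h: "((l, i) \<in> w'\<^sup>* \<or> (l, j) \<in> w'\<^sup>*) \<and> ((i, k) \<in> w'\<^sup>* \<or> (j, k) \<in> w'\<^sup>*)"
          then show False using cyc noc False by blast
        qed
      qed
      have sub: "w' \<subseteq> \<rho>" unfolding \<rho>_def by blast
      define y where yd: "y = (\<lambda>v. if v \<in> V then real (card {u \<in> V. (u, v) \<in> \<rho>\<^sup>*}) / real (card V + 1) else 0)"
      have "y \<in> tor_complement V E \<and> orient_of E y = w'" unfolding yd by (rule rank_point[OF finV ori' Ev sub nb])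
      then have yC: "y \<in> tor_complement V E" and yo: "orient_of E y = w'" by blast+
      have "y \<in> Ch" using yC yo R by (simp add: Ch_iff)
      moreover have "{u \<in> V. (u, i) \<in> \<rho>\<^sup>*} = {u \<in> V. (u, j) \<in> \<rho>\<^sup>*}"
      proof -
        have "(i, j) \<in> \<rho>" "(j, i) \<in> \<rho>" unfolding \<rho>_def by auto
        then show ?thesis by (auto intro: rtrancl_into_rtrancl)
      qed
      then have "y i = y j" unfolding yd using ij by simp
      ultimately show ?thesis using allx by force
    qed
  qed
next
  show "(\<Inter>w'\<in>tor_class V \<omega>. tc_edges w') \<subseteq> TC"
  proof
    fix e assume e: "e \<in> (\<Inter>w'\<in>tor_class V \<omega>. tc_edges w')"
    have "\<omega> \<in> tor_class V \<omega>" by (simp add: tor_class_iff)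
    then have "e \<in> tc_edges \<omega>" using e by blast
    then obtain a b where ab: "e = {a, b}" "(a, b) \<in> \<omega>\<^sup>+" unfolding tc_edges_def by blast
    have abV: "a \<in> V" "b \<in> V" using trancl_subset_Sigma[OF w_sub] ab(2) by blast+
    have anb: "a \<noteq> b" using acy ab(2) unfolding acyclic_def by blast
    have "\<forall>x\<in>Ch. x a - x b \<notin> \<int>"
    proof
      fix x assume x: "x \<in> Ch"
      then have "orient_of E x \<in> tor_class V \<omega>" by (simp add: Ch_iff tor_class_iff)
      then have "e \<in> tc_edges (orient_of E x)" using e by blast
      then obtain c d where cd: "e = {c, d}" "(c, d) \<in> (orient_of E x)\<^sup>+" unfolding tc_edges_def by blast
      have "frac (x c) \<noteq> frac (x d)" using orient_trancl[OF cd(2)] by simp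
      then have n: "x c - x d \<notin> \<int>" by (simp add: frac_ne_nonint)
      have "(c = a \<and> d = b) \<or> (c = b \<and> d = a)" using cd(1) ab(1) by (auto simp: doubleton_eq_iff)
      then show "x a - x b \<notin> \<int>"
      proof
        assume "c = a \<and> d = b" then show ?thesis using n by simp
      next
        assume h: "c = b \<and> d = a"
        show ?thesis
        proof
          assume "x a - x b \<in> \<int>"
          then have "- (x a - x b) \<in> \<int>" by (rule Ints_minus)
          then show False using n h by simp
        qed
      qed
    qed
    then have "e \<in> {{i, j} | i j. i \<in> V \<and> j \<in> V \<and> i \<noteq> j \<and> (\<forall>x\<in>Ch. x i - x j \<notin> \<int>)}"
      using ab(1) abV anb by blast
    then show "e \<in> TC" unfolding torTC_edges_def by (rule UnI2)
  qed
qed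
end

context TP
begin

lemma cover_edge:
  assumes cov: "covers \<omega> i j"
  shows "(i, j) \<in> \<omega>"
proof -
  have t: "(i, j) \<in> \<omega>\<^sup>+" and nk: "\<not> (\<exists>k. (i, k) \<in> \<omega>\<^sup>+ \<and> (k, j) \<in> \<omega>\<^sup>+)"
    using cov unfolding covers_def by blast+
  obtain c where c: "(i, c) \<in> \<omega>" "(c, j) \<in> \<omega>\<^sup>*" using tranclD[OF t] by blast
  show ?thesis
  proof (cases "c = j")
    case True then show ?thesis using c by simp
  next
    case False
    then have "(c, j) \<in> \<omega>\<^sup>+" using c(2) by (meson rtranclD)
    moreover have "(i, c) \<in> \<omega>\<^sup>+" using c(1) by blast
    ultimately show ?thesis using nk by blast
  qed
qed

lemma card_strict:
  assumes kl: "(k, l) \<in> \<omega>"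
  shows "card {u \<in> V. (u, k) \<in> \<omega>\<^sup>*} < card {u \<in> V. (u, l) \<in> \<omega>\<^sup>*}"
proof -
  let ?A = "\<lambda>v. {u \<in> V. (u, v) \<in> \<omega>\<^sup>*}"
  have V1: "l \<in> V" using w_sub kl by blast
  have "?A k \<subseteq> ?A l" using kl by (auto intro: rtrancl_into_rtrancl)
  moreover have "l \<in> ?A l" using V1 by simp
  moreover have "l \<notin> ?A k"
  proof
    assume "l \<in> ?A k"
    then have "(l, k) \<in> \<omega>\<^sup>*" by simp
    then have "(k, k) \<in> \<omega>\<^sup>+" using kl by (meson rtrancl_into_trancl2)
    then show False using acy unfolding acyclic_def by blast
  qed
  ultimately have "?A k \<subset> ?A l" by blast
  then show ?thesis using finV by (intro psubset_card_mono) auto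
qed

lemma hasse_in_F:
  assumes cov: "covers \<omega> i j"
  shows "\<exists>p. p \<in> Ch \<and> {i, j} \<in> Fs p"
proof -
  have ijw: "(i, j) \<in> \<omega>" by (rule cover_edge[OF cov])
  have nk: "\<not> (\<exists>k. (i, k) \<in> \<omega>\<^sup>+ \<and> (k, j) \<in> \<omega>\<^sup>+)" using cov unfolding covers_def by blast
  have ijE: "{i, j} \<in> E" using oriw ijw unfolding is_orientation_def by blast
  have ijV: "i \<in> V" "j \<in> V" "i \<noteq> j" using neighbor_in[OF Ev ijE] by auto
  define X where "X = {v. (i, v) \<in> \<omega>\<^sup>*}"
  define n where "n = card V"
  define q where "q = (\<lambda>v. real (card {u \<in> V. (u, v) \<in> \<omega>\<^sup>*}) / real (8 * (n + 1)))"
  have qr: "0 \<le> q v \<and> q v < 1/8" for v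
  proof -
    have "card {u \<in> V. (u, v) \<in> \<omega>\<^sup>*} \<le> n" unfolding n_def using finV by (intro card_mono) auto
    then have "real (card {u \<in> V. (u, v) \<in> \<omega>\<^sup>*}) < real (n + 1)" by simp
    then show ?thesis unfolding q_def by (simp add: field_simps)
  qed
  have qmono: "q k < q l" if "(k, l) \<in> \<omega>" for k l
    using card_strict[OF that] unfolding q_def by (simp add: divide_strict_right_mono)
  define p where "p = (\<lambda>v. if v \<notin> V then 0 else if v = i then 1/4 else if v = j then 9/32
                            else if v \<in> X then 3/8 + q v else q v)"
  have jX: "j \<in> X" "i \<in> X" unfolding X_def using ijw by auto
  have Xcl: "l \<in> X" if "k \<in> X" "(k, l) \<in> \<omega>" for k l
    using that unfolding X_def by (simp add: rtrancl.rtrancl_into_rtrancl)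
  have pi: "p i = 1/4" and pj: "p j = 9/32" unfolding p_def using ijV by auto
  have pX: "p v = 3/8 + q v" if "v \<in> V" "v \<noteq> i" "v \<noteq> j" "v \<in> X" for v
    unfolding p_def using that by simp
  have pY: "p v = q v" if "v \<in> V" "v \<noteq> i" "v \<noteq> j" "v \<notin> X" for v
    unfolding p_def using that by simp
  have prng: "(0 \<le> p v \<and> p v < 1/8) \<or> (3/8 \<le> p v \<and> p v < 1/2)" if "v \<in> V" "v \<noteq> i" "v \<noteq> j" for v
  proof (cases "v \<in> X")
    case True then show ?thesis using pX[OF that True] qr[of v] by simp
  next
    case False then show ?thesis using pY[OF that False] qr[of v] by simp
  qed
  have mono: "p k < p l" if kl: "(k, l) \<in> \<omega>" for k l
  proof -
    have kV: "k \<in> V" "l \<in> V" using w_sub kl by blast+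
    have kl_ne: "k \<noteq> l" using kl acy unfolding acyclic_def by blast
    have noc: "\<And>s. (s, s) \<notin> \<omega>\<^sup>+" using acy unfolding acyclic_def by blast
    show ?thesis
    proof (cases "l = i")
      case True
      have "k \<notin> X"
      proof
        assume "k \<in> X" then have "(i, k) \<in> \<omega>\<^sup>*" unfolding X_def by simp
        then have "(i, i) \<in> \<omega>\<^sup>+" using kl True by (meson rtrancl_into_trancl1)
        then show False using noc by blast
      qed
      then have "k \<noteq> i" "k \<noteq> j" using jX by auto
      then show ?thesis using pY[OF kV(1) _ _ \<open>k \<notin> X\<close>] qr[of k] True pi by simp
    next
      case li: False
      show ?thesis
      proof (cases "l = j")
        case True
        show ?thesis
        proof (cases "k = i")
          case True then show ?thesis using pi pj \<open>l = j\<close> by simp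
        next
          case ki: False
          have "k \<noteq> j" using kl_ne True by simp
          have "k \<notin> X"
          proof
            assume "k \<in> X" then have "(i, k) \<in> \<omega>\<^sup>*" unfolding X_def by simp
            then have "(i, k) \<in> \<omega>\<^sup>+" using ki by (metis rtranclD)
            moreover have "(k, j) \<in> \<omega>\<^sup>+" using kl True by blast
            ultimately show False using nk by blast
          qed
          then show ?thesis using pY[OF kV(1) ki \<open>k \<noteq> j\<close> \<open>k \<notin> X\<close>] qr[of k] True pj by simp
        qed
      next
        case lj: False
        show ?thesis
        proof (cases "l \<in> X")
          case lX: True
          have pl: "p l = 3/8 + q l" by (rule pX[OF kV(2) li lj lX])
          show ?thesis
          proof (cases "k = i \<or> k = j")
            case True then show ?thesis using pl pi pj qr[of l] by auto
          next
            case False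
            then have ki: "k \<noteq> i" "k \<noteq> j" by auto
            show ?thesis
            proof (cases "k \<in> X")
              case True then show ?thesis using pX[OF kV(1) ki True] pl qmono[OF kl] by simp
            next
              case False then show ?thesis using pY[OF kV(1) ki False] pl qr[of k] qr[of l] by simp
            qed
          qed
        next
          case lX: False
          have kX: "k \<notin> X" using Xcl kl lX by blast
          have "k \<noteq> i" "k \<noteq> j" using kX jX by auto
          then show ?thesis using pY[OF kV(1) _ _ kX] pY[OF kV(2) li lj lX] qmono[OF kl] by simp
        qed
      qed
    qed
  qed
  have pRV: "p \<in> RV V" unfolding RV_def p_def by simp
  have prange: "0 \<le> p v \<and> p v < 1" if "v \<in> V" for v
  proof (cases "v = i \<or> v = j")
    case True then show ?thesis using pi pj by auto
  next
    case False then show ?thesis using prng[OF that] by auto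
  qed
  have pCo: "p \<in> tor_complement V E \<and> orient_of E p = \<omega>"
    by (rule orient_from_values[OF oriw Ev pRV prange mono])
  then have pCh: "p \<in> Ch" by (simp add: Ch_iff)
  have pTC: "p \<in> tor_complement V TC" using Ch_sub_TC[OF pCh] .
  define y where "y = p(i := 5/16)"
  have yRV: "y \<in> RV V" using pRV ijV unfolding y_def RV_def by simp
  have key: "floor (y i - p l) = floor (p i - p l) \<and> y i - p l \<notin> \<int>"
    if "l \<in> V" "l \<noteq> i" "l \<noteq> j" for l
  proof -
    have yi: "y i = 5/16" unfolding y_def by simp
    from prng[OF that] show ?thesis
    proof
      assume h: "0 \<le> p l \<and> p l < 1/8"
      have a: "real_of_int 0 < y i - p l" "y i - p l < real_of_int 0 + 1" using h yi by auto
      have b: "real_of_int 0 < p i - p l" "p i - p l < real_of_int 0 + 1" using h pi by auto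
      show ?thesis using floor_between[OF a] floor_between[OF b] by simp
    next
      assume h: "3/8 \<le> p l \<and> p l < 1/2"
      have a: "real_of_int (-1) < y i - p l" "y i - p l < real_of_int (-1) + 1" using h yi by auto
      have b: "real_of_int (-1) < p i - p l" "p i - p l < real_of_int (-1) + 1" using h pi by auto
      show ?thesis using floor_between[OF a] floor_between[OF b] by simp
    qed
  qed
  have yQ: "y \<in> Qs V (TC - {{i, j}}) p" unfolding Qs_def
  proof (intro CollectI conjI allI impI)
    show "y \<in> RV V" by (rule yRV)
  next
    fix k l assume kl: "{k, l} \<in> TC - {{i, j}}"
    have klT: "{k, l} \<in> TC" and klne: "{k, l} \<noteq> {i, j}" using kl by auto
    have kV: "k \<in> V" "l \<in> V" "k \<noteq> l" using neighbor_in[OF TC_vpairs klT] by auto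
    have pn: "p k - p l \<notin> \<int>" using pTC klT by (simp add: tor_complement_def)
    have "floor (y k - y l) = floor (p k - p l) \<and> y k - y l \<notin> \<int>"
    proof (cases "k = i")
      case True
      have "l \<noteq> j" using klne True by auto
      then have "floor (y i - p l) = floor (p i - p l) \<and> y i - p l \<notin> \<int>"
        using key kV True by simp
      moreover have "y l = p l" unfolding y_def using kV True by simp
      ultimately show ?thesis using True by simp
    next
      case ki: False
      show ?thesis
      proof (cases "l = i")
        case True
        have "k \<noteq> j" using klne True by (auto simp: insert_commute)
        then have h: "floor (y i - p k) = floor (p i - p k) \<and> y i - p k \<notin> \<int>"
          using key kV ki by simp
        have yk: "y k = p k" unfolding y_def using ki by simp
        have pn': "p i - p k \<notin> \<int>"
        proof
          assume "p i - p k \<in> \<int>" then have "- (p i - p k) \<in> \<int>" by (rule Ints_minus)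
          then show False using pn True by simp
        qed
        have yn': "y i - p k \<notin> \<int>" using h by blast
        have e1: "y k - y l = - (y i - p k)" using yk True by simp
        have e2: "p k - p l = - (p i - p k)" using True by simp
        have "floor (y k - y l) = - floor (y i - p k) - 1" unfolding e1 by (rule floor_neg_nonint[OF yn'])
        moreover have "floor (p k - p l) = - floor (p i - p k) - 1" unfolding e2 by (rule floor_neg_nonint[OF pn'])
        moreover have "y k - y l \<notin> \<int>"
        proof
          assume "y k - y l \<in> \<int>" then have "- (y k - y l) \<in> \<int>" by (rule Ints_minus)
          then show False using yn' e1 by simp
        qed
        ultimately show ?thesis using h by simp
      next
        case False
        have "y k = p k" "y l = p l" unfolding y_def using ki False by simp_all
        then show ?thesis using pn by simp
      qed
    qed
    then show "floor (y k - y l) = floor (p k - p l)" "y k - y l \<notin> \<int>" by blast+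
  qed
  have ynQ: "y \<notin> Qs V TC p"
  proof
    assume yq: "y \<in> Qs V TC p"
    have "{i, j} \<in> TC" using E_TC ijE by blast
    then have "floor (y i - y j) = floor (p i - p j)" using QsD[OF yq] by blast
    moreover have "y i - y j = 1/32" unfolding y_def using pj ijV by simp
    moreover have "p i - p j = - 1/32" using pi pj by simp
    ultimately show False by simp
  qed
  have "{i, j} \<in> Fs p" unfolding Fs_def using E_TC ijE yQ ynQ by blast
  then show ?thesis using pCh by blast
qed

end

theorem mainTheorem8:
  fixes V :: "'a set" and E :: "'a set set" and \<omega> :: "('a \<times> 'a) set"
  assumes "simple_graph V E"
    and "\<omega> \<in> Acyc V E"
  shows "hasse_edges \<omega> \<subseteq> torHasse_edges V E \<omega>
       \<and> torHasse_edges V E \<omega> \<subseteq> torTC_edges V E \<omega>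
       \<and> torTC_edges V E \<omega> = (\<Inter>\<omega>'\<in>tor_class V \<omega>. tc_edges \<omega>')"
proof -
  interpret TP V E \<omega> using assms by unfold_locales
  obtain p0 where p0: "p0 \<in> Ch" using p0_exists by blast
  have h1: "hasse_edges \<omega> \<subseteq> torHasse_edges V E \<omega>"
  proof
    fix e assume "e \<in> hasse_edges \<omega>"
    then obtain i j where e: "e = {i, j}" "covers \<omega> i j" unfolding hasse_edges_def by blast
    obtain p where p: "p \<in> Ch" "{i, j} \<in> Fs p" using hasse_in_F[OF e(2)] by blast
    show "e \<in> torHasse_edges V E \<omega>" using p torHasse_eq[OF p(1)] e(1) by simp
  qed
  have h2: "torHasse_edges V E \<omega> \<subseteq> torTC_edges V E \<omega>"
    using torHasse_eq[OF p0] unfolding Fs_def by blast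
  show ?thesis using h1 h2 part3 by blast
qed

end
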